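(* Let $k\ge1$ and $0<\alpha<\alpha_1<\alpha_2<\dots<\alpha_k<1$. For the asymmetric walk with fixed $q<p$, $$\lim_{N\to\infty}P_{[\alpha N]}\Big(\bigcap_{i=1}^k\{G([\alpha_iN])\equiv1\ (\mathrm{mod}\ 2)\}\Big)=\frac{1}{(2-(p-q))^k}.$$ Consequently, by inclusion–exclusion, the parities of $G([\alpha_1N]),\dots,G([\alpha_kN])$ converge jointly in distribution to i.i.d. Bernoulli random variables that equal "odd" with probability $(2-(p-q))^{-1}$.
   Context: Let $\mathcal T_N=\{0,\dots,N\}$ and let $(X_n)$ be a nearest-neighbour random walk on $\mathcal T_N$ stepping right with probability $p$ and left with probability $q=1-p$, where $0<q<p$ are fixed, independently at each step, and stopped the first time it is at $0$ or $N$. $P_x$ denotes the law with $X_0=x$. $T_a=\inf\{n\ge1:X_n=a\}$, $\tau_N=T_0\wedge T_N$, and $G(y)=\sum_{k=0}^{\tau_N}\mathbf 1\{X_k=y\}$ is the number of visits to $y$ before exit. $[\cdot]$ is the integer part. *)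

theory Defs
  imports "HOL-Probability.Probability"
begin

text \<open>Step sequence: omega !! n = True means the (n+1)-st step is to the right.
  Steps are i.i.d. with P(right) = p, P(left) = q = 1 - p.\<close>
definition step_space :: "real \<Rightarrow> bool stream measure" where
  "step_space p = stream_space (measure_pmf (bernoulli_pmf p))"

fun walk :: "nat \<Rightarrow> nat \<Rightarrow> bool stream \<Rightarrow> nat \<Rightarrow> nat" where
  "walk N x \<omega> 0 = x"
| "walk N x \<omega> (Suc n) =
     (let y = walk N x \<omega> n in
      if y = 0 \<or> y = N then y
      else if \<omega> !! n then y + 1 else y - 1)"

text \<open>G(y) = number of k \<le> tau_N with X_k = y, where tau_N = T_0 \<and> T_N and
  T_a = inf {n \<ge> 1. X_n = a}; k \<le> tau_N iff X_j \<notin> {0,N} for all 1 \<le> j < k.\<close>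
definition visits :: "nat \<Rightarrow> nat \<Rightarrow> nat \<Rightarrow> bool stream \<Rightarrow> nat" where
  "visits N x y \<omega> =
     card {k. walk N x \<omega> k = y \<and>
              (\<forall>j. 1 \<le> j \<and> j < k \<longrightarrow> walk N x \<omega> j \<noteq> 0 \<and> walk N x \<omega> j \<noteq> N)}"

definition Pwalk :: "real \<Rightarrow> (bool stream \<Rightarrow> bool) \<Rightarrow> real" where
  "Pwalk p E = measure (step_space p) {\<omega> \<in> space (step_space p). E \<omega>}"

end

theory Submission
  imports Defs
begin



definition stp :: "nat \<Rightarrow> nat \<Rightarrow> bool \<Rightarrow> nat" where
  "stp N y b = (if y = 0 \<or> y = N then y else if b then y + 1 else y - 1)"

lemma walk_Suc': "walk N x \<omega> (Suc n) = stp N (walk N x \<omega> n) (\<omega> !! n)"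
  by (simp add: stp_def Let_def)

declare walk.simps(2)[simp del]

lemma walk_Stream: "walk N x (b ## \<omega>) (Suc n) = walk N (stp N x b) \<omega> n"
  by (induction n) (simp_all add: walk_Suc')

lemma measurable_walk[measurable]:
  "(\<lambda>\<omega>. walk N x \<omega> n) \<in> measurable (stream_space (measure_pmf (bernoulli_pmf p))) (count_space UNIV)"
proof (induction n)
  case 0 then show ?case by simp
next
  case (Suc n)
  note [measurable] = Suc
  show ?case unfolding walk_Suc' stp_def by measurable
qed



lemma measurable_card_pred:
  fixes C :: "nat \<Rightarrow> 'a \<Rightarrow> bool"
  assumes [measurable]: "\<And>k. Measurable.pred M (C k)"
  shows "(\<lambda>\<omega>. card {k. C k \<omega>}) \<in> measurable M (count_space UNIV)"
proof -
  have fin[measurable]: "(\<lambda>\<omega>. card {k. k < K \<and> C k \<omega>}) \<in> measurable M (count_space UNIV)" for K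
  proof (induction K)
    case 0 then show ?case by simp
  next
    case (Suc K)
    note [measurable] = Suc
    have eq: "card {k. k < Suc K \<and> C k \<omega>} = card {k. k < K \<and> C k \<omega>} + (if C K \<omega> then 1 else 0)" for \<omega>
    proof -
      have "{k. k < Suc K \<and> C k \<omega>} = (if C K \<omega> then insert K {k. k < K \<and> C k \<omega>} else {k. k < K \<and> C k \<omega>})"
        by (auto simp: less_Suc_eq)
      then show ?thesis by auto
    qed
    show ?case unfolding eq by measurable
  qed
  have char: "card {k. C k \<omega>} = n \<longleftrightarrow>
     (\<exists>K. (\<forall>k. K \<le> k \<longrightarrow> \<not> C k \<omega>) \<and> card {k. k < K \<and> C k \<omega>} = n) \<or> (n = 0 \<and> (\<forall>K. \<exists>k. K \<le> k \<and> C k \<omega>))" for \<omega> n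
  proof (cases "finite {k. C k \<omega>}")
    case True
    then obtain K where K: "\<forall>k\<in>{k. C k \<omega>}. k < K" using finite_nat_bounded by blast
    then have e: "{k. k < K \<and> C k \<omega>} = {k. C k \<omega>}" by auto
    have "\<not> (\<forall>K. \<exists>k. K \<le> k \<and> C k \<omega>)" using K by (meson leD mem_Collect_eq)
    moreover have "(\<exists>K. (\<forall>k. K \<le> k \<longrightarrow> \<not> C k \<omega>) \<and> card {k. k < K \<and> C k \<omega>} = n) \<longleftrightarrow> card {k. C k \<omega>} = n"
    proof
      assume "\<exists>K. (\<forall>k. K \<le> k \<longrightarrow> \<not> C k \<omega>) \<and> card {k. k < K \<and> C k \<omega>} = n"
      then obtain K' where "\<forall>k. K' \<le> k \<longrightarrow> \<not> C k \<omega>" "card {k. k < K' \<and> C k \<omega>} = n" by blast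
      moreover have "{k. k < K' \<and> C k \<omega>} = {k. C k \<omega>}" using calculation(1) by (auto simp: not_le[symmetric])
      ultimately show "card {k. C k \<omega>} = n" by simp
    next
      assume "card {k. C k \<omega>} = n"
      then show "\<exists>K. (\<forall>k. K \<le> k \<longrightarrow> \<not> C k \<omega>) \<and> card {k. k < K \<and> C k \<omega>} = n"
      proof (intro exI[of _ K] conjI allI impI)
        fix k assume "K \<le> k" then show "\<not> C k \<omega>" using K by (meson leD mem_Collect_eq)
      qed (simp add: e)
    qed
    ultimately show ?thesis by blast
  next
    case False
    have inf: "\<forall>K. \<exists>k. K \<le> k \<and> C k \<omega>"
    proof
      fix K show "\<exists>k. K \<le> k \<and> C k \<omega>"
      proof (rule ccontr)
        assume "\<not> (\<exists>k. K \<le> k \<and> C k \<omega>)"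
        then have "{k. C k \<omega>} \<subseteq> {..<K}" by (auto simp: not_le[symmetric])
        then show False using False finite_subset by blast
      qed
    qed
    have "\<not> (\<exists>K. (\<forall>k. K \<le> k \<longrightarrow> \<not> C k \<omega>))" using inf by blast
    then show ?thesis using False inf by (metis card.infinite)
  qed
  show ?thesis
  proof (subst measurable_count_space_eq2_countable, intro conjI ballI)
    fix n :: nat
    have "(\<lambda>\<omega>. card {k. C k \<omega>}) -` {n} \<inter> space M = {\<omega>\<in>space M. card {k. C k \<omega>} = n}"
      by auto
    also have "\<dots> =
      {\<omega>\<in>space M. (\<exists>K. (\<forall>k. K \<le> k \<longrightarrow> \<not> C k \<omega>) \<and> card {k. k < K \<and> C k \<omega>} = n) \<or> (n = 0 \<and> (\<forall>K. \<exists>k. K \<le> k \<and> C k \<omega>))}"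
      by (simp only: char)
    also have "\<dots> \<in> sets M" by measurable
    finally show "(\<lambda>\<omega>. card {k. C k \<omega>}) -` {n} \<inter> space M \<in> sets M" .
  qed auto
qed



abbreviation SS :: "real \<Rightarrow> bool stream measure" where
  "SS p \<equiv> stream_space (measure_pmf (bernoulli_pmf p))"

lemma prob_space_SS: "prob_space (SS p)"
  by (rule prob_space.prob_space_stream_space[OF prob_space_measure_pmf])

lemma first_step_int:
  fixes f :: "bool stream \<Rightarrow> real"
  assumes p: "0 \<le> p" "p \<le> 1" and f[measurable]: "f \<in> borel_measurable (SS p)"
    and B: "\<And>\<omega>. \<bar>f \<omega>\<bar> \<le> B"
  shows "integral\<^sup>L (SS p) f = p * integral\<^sup>L (SS p) (\<lambda>\<omega>. f (True ## \<omega>))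
            + (1 - p) * integral\<^sup>L (SS p) (\<lambda>\<omega>. f (False ## \<omega>))"
proof -
  interpret S: prob_space "SS p" by (rule prob_space_SS)
  define g where "g \<omega> = f \<omega> + B" for \<omega>
  have g0: "0 \<le> g \<omega>" for \<omega> using B[of \<omega>] by (simp add: g_def)
  have gm[measurable]: "g \<in> borel_measurable (SS p)" unfolding g_def by measurable
  have gb: "norm (g \<omega>) \<le> 2 * B" for \<omega> using B[of \<omega>] by (simp add: g_def)
  have ig: "integrable (SS p) g" by (rule S.integrable_const_bound[where B="2*B"]) (use gb in auto)
  have igT: "integrable (SS p) (\<lambda>\<omega>. g (b ## \<omega>))" for b
    by (rule S.integrable_const_bound[where B="2*B"]) (use gb in auto)
  have "ennreal (integral\<^sup>L (SS p) g) = (\<integral>\<^sup>+X. g X \<partial>SS p)"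
    by (rule nn_integral_eq_integral[symmetric]) (use ig g0 in auto)
  also have "\<dots> = (\<integral>\<^sup>+x. (\<integral>\<^sup>+X. g (x ## X) \<partial>SS p) \<partial>measure_pmf (bernoulli_pmf p))"
    by (rule prob_space.nn_integral_stream_space[OF prob_space_measure_pmf]) measurable
  also have "\<dots> = (\<integral>\<^sup>+X. g (True ## X) \<partial>SS p) * ennreal p + (\<integral>\<^sup>+X. g (False ## X) \<partial>SS p) * ennreal (1 - p)"
    by (rule nn_integral_bernoulli_pmf) (use p in auto)
  also have "\<dots> = ennreal (integral\<^sup>L (SS p) (\<lambda>X. g (True ## X))) * ennreal p + ennreal (integral\<^sup>L (SS p) (\<lambda>X. g (False ## X))) * ennreal (1 - p)"
    using igT[of True] igT[of False] g0 by (simp add: nn_integral_eq_integral)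
  also have "\<dots> = ennreal (integral\<^sup>L (SS p) (\<lambda>X. g (True ## X)) * p + integral\<^sup>L (SS p) (\<lambda>X. g (False ## X)) * (1 - p))"
  proof -
    have a: "0 \<le> integral\<^sup>L (SS p) (\<lambda>X. g (b ## X))" for b using g0 by (simp add: integral_nonneg_AE)
    show ?thesis using a[of True] a[of False] p
      by (simp add: ennreal_mult[symmetric] ennreal_plus[symmetric] del: ennreal_plus)
  qed
  finally have "integral\<^sup>L (SS p) g = integral\<^sup>L (SS p) (\<lambda>X. g (True ## X)) * p + integral\<^sup>L (SS p) (\<lambda>X. g (False ## X)) * (1 - p)"
  proof (subst (asm) ennreal_inj)
    show "0 \<le> integral\<^sup>L (SS p) g" using g0 by (simp add: integral_nonneg_AE)
    have a: "0 \<le> integral\<^sup>L (SS p) (\<lambda>X. g (b ## X))" for b using g0 by (simp add: integral_nonneg_AE)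
    show "0 \<le> integral\<^sup>L (SS p) (\<lambda>X. g (True ## X)) * p + integral\<^sup>L (SS p) (\<lambda>X. g (False ## X)) * (1 - p)"
      using a[of True] a[of False] p by simp
  qed
  moreover have "integrable (SS p) f" by (rule S.integrable_const_bound[where B=B]) (use B in auto)
  moreover have "integrable (SS p) (\<lambda>\<omega>. f (b ## \<omega>))" for b by (rule S.integrable_const_bound[where B=B]) (use B in auto)
  ultimately show ?thesis unfolding g_def
    by (simp add: Bochner_Integration.integral_add algebra_simps)
qed


definition cnd :: "nat \<Rightarrow> nat \<Rightarrow> nat \<Rightarrow> bool stream \<Rightarrow> nat \<Rightarrow> bool" where
  "cnd N x y \<omega> k = (walk N x \<omega> k = y \<and> (\<forall>j. 1 \<le> j \<and> j < k \<longrightarrow> walk N x \<omega> j \<noteq> 0 \<and> walk N x \<omega> j \<noteq> N))"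

definition NE :: "nat \<Rightarrow> nat \<Rightarrow> bool stream \<Rightarrow> bool" where
  "NE N x \<omega> = (\<forall>j. 1 \<le> j \<longrightarrow> walk N x \<omega> j \<noteq> 0 \<and> walk N x \<omega> j \<noteq> N)"

lemma visits_cnd: "visits N x y \<omega> = card {k. cnd N x y \<omega> k}"
  unfolding visits_def cnd_def by simp

lemma measurable_cnd[measurable]: "Measurable.pred (SS p) (\<lambda>\<omega>. cnd N x y \<omega> k)"
  unfolding cnd_def by measurable

lemma measurable_NE[measurable]: "Measurable.pred (SS p) (NE N x)"
  unfolding NE_def by measurable

lemma measurable_visits[measurable]: "(\<lambda>\<omega>. visits N x y \<omega>) \<in> measurable (SS p) (count_space UNIV)"
  unfolding visits_cnd by (rule measurable_card_pred) measurable

lemma walk_bdry: "x = 0 \<or> x = N \<Longrightarrow> walk N x \<omega> n = x"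
  by (induction n) (auto simp: walk_Suc' stp_def)

lemma cnd_Stream_pt:
  assumes y: "0 < y" "y < N"
  shows "cnd N x y (b ## \<omega>) k \<longleftrightarrow> (k = 0 \<and> x = y) \<or>
     (\<exists>m. k = Suc m \<and> stp N x b \<noteq> 0 \<and> stp N x b \<noteq> N \<and> cnd N (stp N x b) y \<omega> m)"
proof (cases k)
  case 0 then show ?thesis by (auto simp: cnd_def)
next
  case (Suc m)
  let ?x1 = "stp N x b"
  have w1: "walk N x (b ## \<omega>) (Suc j) = walk N ?x1 \<omega> j" for j by (rule walk_Stream)
  have "cnd N x y (b ## \<omega>) (Suc m) \<longleftrightarrow> (?x1 \<noteq> 0 \<and> ?x1 \<noteq> N \<and> cnd N ?x1 y \<omega> m)"
  proof
    assume c: "cnd N x y (b ## \<omega>) (Suc m)"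
    then have a: "walk N ?x1 \<omega> m = y" by (simp add: cnd_def w1)
    have b: "walk N ?x1 \<omega> j \<noteq> 0 \<and> walk N ?x1 \<omega> j \<noteq> N" if "j < m" for j
    proof -
      have "1 \<le> Suc j \<and> Suc j < Suc m" using that by simp
      then have "walk N x (b ## \<omega>) (Suc j) \<noteq> 0 \<and> walk N x (b ## \<omega>) (Suc j) \<noteq> N"
        using c unfolding cnd_def by blast
      then show ?thesis unfolding w1 .
    qed
    show "?x1 \<noteq> 0 \<and> ?x1 \<noteq> N \<and> cnd N ?x1 y \<omega> m"
    proof (cases m)
      case 0 then show ?thesis using a y by (auto simp: cnd_def)
    next
      case (Suc m')
      have "?x1 \<noteq> 0 \<and> ?x1 \<noteq> N" using b[of 0] Suc by simp
      moreover have "\<forall>j. 1 \<le> j \<and> j < m \<longrightarrow> walk N ?x1 \<omega> j \<noteq> 0 \<and> walk N ?x1 \<omega> j \<noteq> N"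
        using b by blast
      ultimately show ?thesis using a by (simp add: cnd_def)
    qed
  next
    assume c: "?x1 \<noteq> 0 \<and> ?x1 \<noteq> N \<and> cnd N ?x1 y \<omega> m"
    have q1: "walk N x (b ## \<omega>) (Suc m) = y" using c by (simp add: w1 cnd_def)
    have q2: "walk N x (b ## \<omega>) j \<noteq> 0 \<and> walk N x (b ## \<omega>) j \<noteq> N" if j: "1 \<le> j \<and> j < Suc m" for j
    proof -
      from j obtain j' where j': "j = Suc j'" "j' < m" by (cases j) auto
      show "walk N x (b ## \<omega>) j \<noteq> 0 \<and> walk N x (b ## \<omega>) j \<noteq> N"
      proof (cases j')
        case 0 then show ?thesis using c j' by (simp add: w1)
      next
        case (Suc j'') then show ?thesis using c j' unfolding cnd_def by (simp add: w1)
      qed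
    qed
    show "cnd N x y (b ## \<omega>) (Suc m)" unfolding cnd_def using q1 q2 by blast
  qed
  then show ?thesis using Suc by simp
qed

lemma cnd_Stream:
  assumes y: "0 < y" "y < N"
  shows "{k. cnd N x y (b ## \<omega>) k} = (if x = y then {0} else {}) \<union>
     (if stp N x b \<noteq> 0 \<and> stp N x b \<noteq> N then Suc ` {k. cnd N (stp N x b) y \<omega> k} else {})"
proof (rule set_eqI)
  fix k
  show "k \<in> {k. cnd N x y (b ## \<omega>) k} \<longleftrightarrow> k \<in> (if x = y then {0} else {}) \<union>
     (if stp N x b \<noteq> 0 \<and> stp N x b \<noteq> N then Suc ` {k. cnd N (stp N x b) y \<omega> k} else {})"
    unfolding mem_Collect_eq cnd_Stream_pt[OF y] by (cases k) auto
qed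

lemma NE_Stream: "NE N x (b ## \<omega>) \<longleftrightarrow> (stp N x b \<noteq> 0 \<and> stp N x b \<noteq> N \<and> NE N (stp N x b) \<omega>)"
proof
  assume a: "NE N x (b ## \<omega>)"
  have "walk N (stp N x b) \<omega> j \<noteq> 0 \<and> walk N (stp N x b) \<omega> j \<noteq> N" for j
  proof -
    have "walk N x (b ## \<omega>) (Suc j) \<noteq> 0 \<and> walk N x (b ## \<omega>) (Suc j) \<noteq> N"
      using a unfolding NE_def by simp
    then show ?thesis by (simp add: walk_Stream)
  qed
  from this[of 0] this show "stp N x b \<noteq> 0 \<and> stp N x b \<noteq> N \<and> NE N (stp N x b) \<omega>"
    unfolding NE_def by simp
next
  assume a: "stp N x b \<noteq> 0 \<and> stp N x b \<noteq> N \<and> NE N (stp N x b) \<omega>"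
  show "NE N x (b ## \<omega>)" unfolding NE_def
  proof (intro allI impI)
    fix j :: nat assume "1 \<le> j"
    then obtain j' where j': "j = Suc j'" by (cases j) auto
    show "walk N x (b ## \<omega>) j \<noteq> 0 \<and> walk N x (b ## \<omega>) j \<noteq> N"
    proof (cases j')
      case 0 then show ?thesis using a j' by (simp add: walk_Stream)
    next
      case (Suc j'') then show ?thesis using a j' unfolding NE_def by (simp add: walk_Stream)
    qed
  qed
qed

lemma finite_cnd: "\<not> NE N x \<omega> \<Longrightarrow> finite {k. cnd N x y \<omega> k}"
proof -
  assume "\<not> NE N x \<omega>"
  then have "\<exists>j. 1 \<le> j \<and> (walk N x \<omega> j = 0 \<or> walk N x \<omega> j = N)" unfolding NE_def by simp
  then obtain j where j: "1 \<le> j" "walk N x \<omega> j = 0 \<or> walk N x \<omega> j = N" by blast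
  have "k \<le> j" if "cnd N x y \<omega> k" for k
  proof (rule ccontr)
    assume "\<not> k \<le> j"
    then have "1 \<le> j \<and> j < k" using j by simp
    then have "walk N x \<omega> j \<noteq> 0 \<and> walk N x \<omega> j \<noteq> N" using that unfolding cnd_def by blast
    then show False using j(2) by simp
  qed
  then have "{k. cnd N x y \<omega> k} \<subseteq> {..j}" by auto
  then show ?thesis by (rule finite_subset) simp
qed

lemma cnd_bdry_empty: "0 < y \<Longrightarrow> y < N \<Longrightarrow> x = 0 \<or> x = N \<Longrightarrow> {k. cnd N x y \<omega> k} = {}"
proof -
  assume a: "0 < y" "y < N" "x = 0 \<or> x = N"
  have "\<not> cnd N x y \<omega> k" for k
  proof (cases k)
    case 0 then show ?thesis using a by (auto simp: cnd_def)
  next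
    case (Suc k')
    show ?thesis
    proof
      assume c: "cnd N x y \<omega> k"
      then have "walk N x \<omega> k = y" by (simp add: cnd_def)
      then show False using walk_bdry[of x N \<omega> k] a by auto
    qed
  qed
  then show ?thesis by auto
qed

lemma visits_Stream:
  assumes y: "0 < y" "y < N" and fin: "\<not> NE N (stp N x b) \<omega>"
  shows "visits N x y (b ## \<omega>) = (if x = y then 1 else 0) + visits N (stp N x b) y \<omega>"
proof -
  define A where "A = {k. cnd N (stp N x b) y \<omega> k}"
  have f: "finite A" using fin unfolding A_def by (rule finite_cnd)
  have cA: "card (Suc ` A) = card A" by (simp add: card_image)
  have c0: "card (insert 0 (Suc ` A)) = Suc (card A)" using f cA by (simp add: card_insert_if)
  show ?thesis
  proof (cases "stp N x b \<noteq> 0 \<and> stp N x b \<noteq> N")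
    case True
    then have "{k. cnd N x y (b ## \<omega>) k} = (if x = y then insert 0 (Suc ` A) else Suc ` A)"
      unfolding cnd_Stream[OF y] A_def by auto
    then show ?thesis unfolding visits_cnd A_def[symmetric] using c0 cA by simp
  next
    case False
    then have "A = {}" unfolding A_def using cnd_bdry_empty[OF y, of "stp N x b"] by auto
    moreover have "{k. cnd N x y (b ## \<omega>) k} = (if x = y then {0} else {})"
      unfolding cnd_Stream[OF y] using False by auto
    ultimately show ?thesis unfolding visits_cnd A_def[symmetric] by simp
  qed
qed


lemma maxprin:
  fixes f :: "nat \<Rightarrow> real" and p q :: real
  assumes pq: "0 < p" "0 < q" "p + q = 1"
    and sub: "\<And>z. 0 < z \<Longrightarrow> z < N \<Longrightarrow> f z \<le> p * f (z + 1) + q * f (z - 1)"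
    and x: "x \<le> N"
  shows "f x \<le> max (f 0) (f N)"
proof -
  define M where "M = Max (f ` {0..N})"
  have fin: "finite (f ` {0..N})" by simp
  have le: "f z \<le> M" if "z \<le> N" for z unfolding M_def using fin that by (intro Max_ge) auto
  have "M \<in> f ` {0..N}" unfolding M_def by (rule Max_in) auto
  then obtain z0 where z0: "z0 \<le> N" "f z0 = M" by auto
  define x0 where "x0 = (LEAST z. z \<le> N \<and> f z = M)"
  have x0: "x0 \<le> N" "f x0 = M" unfolding x0_def using LeastI[of "\<lambda>z. z \<le> N \<and> f z = M" z0] z0 by auto
  have x0min: "\<And>z. z \<le> N \<and> f z = M \<Longrightarrow> x0 \<le> z" unfolding x0_def by (rule Least_le)
  have "x0 = 0 \<or> x0 = N"
  proof (rule ccontr)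
    assume "\<not> (x0 = 0 \<or> x0 = N)"
    then have i: "0 < x0" "x0 < N" using x0 by auto
    have a: "f (x0 + 1) \<le> M" using le i by simp
    have "f (x0 - 1) \<noteq> M"
    proof
      assume "f (x0 - 1) = M"
      then have "x0 \<le> x0 - 1" using x0min[of "x0 - 1"] i by simp
      then show False using i by simp
    qed
    moreover have "f (x0 - 1) \<le> M" using i by (intro le) simp
    ultimately have b: "f (x0 - 1) < M" by linarith
    have "p * f (x0 + 1) + q * f (x0 - 1) < p * M + q * M"
      using a b pq by (smt (verit) mult_left_mono mult_strict_left_mono)
    also have "\<dots> = M" using pq by (simp add: distrib_right[symmetric])
    finally show False using sub[OF i] x0 by simp
  qed
  then show ?thesis using le[OF x] x0 by auto
qed

locale rw =
  fixes p q :: real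
  assumes q_def: "q = 1 - p" and q0: "0 < q" and qp: "q < p"
begin

lemma p0: "0 < p" and p1: "p < 1" and pq1: "p + q = 1" and p_le: "p \<le> 1" and p_ge: "0 \<le> p"
  using q_def q0 qp by auto

abbreviation "S \<equiv> SS p"

lemma S_prob: "prob_space S" by (rule prob_space_SS)

lemma NE_interior: "NE N w \<omega> \<Longrightarrow> w \<noteq> 0 \<and> w \<noteq> N"
proof -
  assume "NE N w \<omega>"
  then have "walk N w \<omega> 1 \<noteq> 0 \<and> walk N w \<omega> 1 \<noteq> N" unfolding NE_def by simp
  then show ?thesis by (metis walk_bdry)
qed

lemma stp_T: "0 < x \<Longrightarrow> x < N \<Longrightarrow> stp N x True = x + 1"
  and stp_F: "0 < x \<Longrightarrow> x < N \<Longrightarrow> stp N x False = x - 1"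
  by (auto simp: stp_def)

definition zz :: "nat \<Rightarrow> nat \<Rightarrow> real" where
  "zz N x = integral\<^sup>L S (\<lambda>\<omega>. if NE N x \<omega> then 1 else 0)"

lemma zz_nonneg: "0 \<le> zz N x"
  unfolding zz_def by (rule integral_nonneg_AE) auto

lemma zz_bdry: "x = 0 \<or> x = N \<Longrightarrow> zz N x = 0"
proof -
  assume "x = 0 \<or> x = N"
  then have "(\<lambda>\<omega>. if NE N x \<omega> then 1 else 0 :: real) = (\<lambda>_. 0)" using NE_interior[of N x] by (intro ext) auto
  then show ?thesis unfolding zz_def by simp
qed

lemma zz_rec:
  assumes x: "0 < x" "x < N"
  shows "zz N x = p * zz N (x + 1) + q * zz N (x - 1)"
proof -
  have "zz N x = p * integral\<^sup>L S (\<lambda>\<omega>. (\<lambda>\<omega>. if NE N x \<omega> then 1 else 0) (True ## \<omega>))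
      + (1 - p) * integral\<^sup>L S (\<lambda>\<omega>. (\<lambda>\<omega>. if NE N x \<omega> then 1 else 0) (False ## \<omega>))"
    unfolding zz_def by (rule first_step_int[where B=1]) (use p_ge p_le in auto)
  moreover have e: "(\<lambda>\<omega>. (\<lambda>\<omega>. if NE N x \<omega> then 1 else 0) (b ## \<omega>)) = (\<lambda>\<omega>. if NE N (stp N x b) \<omega> then (1::real) else 0)" for b
    using NE_Stream NE_interior by fastforce
  ultimately show ?thesis unfolding zz_def e stp_T[OF x] stp_F[OF x] q_def by simp
qed

lemma zz_zero: "x \<le> N \<Longrightarrow> zz N x = 0"
  using maxprin[of p q N "zz N" x] p0 q0 pq1 zz_rec zz_bdry[of 0 N] zz_bdry[of N N] zz_nonneg[of N x]
  by force

lemma AE_not_NE: "x \<le> N \<Longrightarrow> AE \<omega> in S. \<not> NE N x \<omega>"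
proof -
  interpret P: prob_space S by (rule S_prob)
  assume x: "x \<le> N"
  have "integral\<^sup>L S (\<lambda>\<omega>. if NE N x \<omega> then 1 else 0 :: real) = 0" using zz_zero[OF x] by (simp add: zz_def)
  then have "AE \<omega> in S. (if NE N x \<omega> then 1 else 0 :: real) = 0"
    by (subst (asm) integral_nonneg_eq_0_iff_AE) (auto intro!: P.integrable_const_bound[where B=1])
  then show ?thesis by (auto elim: AE_mp)
qed

end


definition Uf :: "nat \<Rightarrow> (nat \<Rightarrow> nat) \<Rightarrow> nat set \<Rightarrow> nat \<Rightarrow> bool stream \<Rightarrow> real" where
  "Uf N y T x \<omega> = (\<Prod>i\<in>T. (-1::real) ^ visits N x (y i) \<omega>)"

definition sg :: "(nat \<Rightarrow> nat) \<Rightarrow> nat set \<Rightarrow> nat \<Rightarrow> real" where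
  "sg y T x = (\<Prod>i\<in>T. if y i = x then -1 else 1)"

lemma measurable_Uf[measurable]: "Uf N y T x \<in> borel_measurable (SS p)"
  unfolding Uf_def by measurable

lemma abs_Uf: "\<bar>Uf N y T x \<omega>\<bar> \<le> 1"
  unfolding Uf_def by (simp add: abs_prod power_abs prod_le_1)

lemma abs_sg: "\<bar>sg y T x\<bar> = 1"
  unfolding sg_def abs_prod by (rule prod.neutral) simp

context rw
begin

definition U :: "nat \<Rightarrow> (nat \<Rightarrow> nat) \<Rightarrow> nat set \<Rightarrow> nat \<Rightarrow> real" where
  "U N y T x = integral\<^sup>L S (Uf N y T x)"

lemma U_bdry:
  assumes y: "\<And>i. i \<in> T \<Longrightarrow> 0 < y i \<and> y i < N" and x: "x = 0 \<or> x = N"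
  shows "U N y T x = 1"
proof -
  interpret P: prob_space S by (rule S_prob)
  have "visits N x (y i) \<omega> = 0" if "i \<in> T" for i \<omega>
    using cnd_bdry_empty[of "y i" N x \<omega>] y[OF that] x by (simp add: visits_cnd)
  then have "Uf N y T x = (\<lambda>_. 1)" unfolding Uf_def by (intro ext prod.neutral) simp
  then show ?thesis unfolding U_def by (simp add: P.prob_space)
qed

lemma Uf_Stream:
  assumes y: "\<And>i. i \<in> T \<Longrightarrow> 0 < y i \<and> y i < N" and fin: "\<not> NE N (stp N x b) \<omega>"
  shows "Uf N y T x (b ## \<omega>) = sg y T x * Uf N y T (stp N x b) \<omega>"
proof -
  have "(-1::real) ^ visits N x (y i) (b ## \<omega>) = (if y i = x then -1 else 1) * (-1) ^ visits N (stp N x b) (y i) \<omega>"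
    if "i \<in> T" for i
    using visits_Stream[of "y i" N x b \<omega>] y[OF that] fin by (auto simp: power_add)
  then show ?thesis unfolding Uf_def sg_def by (simp add: prod.distrib[symmetric])
qed

lemma U_rec:
  assumes y: "\<And>i. i \<in> T \<Longrightarrow> 0 < y i \<and> y i < N" and x: "0 < x" "x < N"
  shows "U N y T x = sg y T x * (p * U N y T (x + 1) + q * U N y T (x - 1))"
proof -
  have "U N y T x = p * integral\<^sup>L S (\<lambda>\<omega>. Uf N y T x (True ## \<omega>))
      + (1 - p) * integral\<^sup>L S (\<lambda>\<omega>. Uf N y T x (False ## \<omega>))"
    unfolding U_def by (rule first_step_int[where B=1]) (use p_ge p_le abs_Uf in auto)
  moreover have e: "integral\<^sup>L S (\<lambda>\<omega>. Uf N y T x (b ## \<omega>)) = sg y T x * U N y T (stp N x b)" for b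
  proof -
    have le: "stp N x b \<le> N" using x by (auto simp: stp_def)
    have "integral\<^sup>L S (\<lambda>\<omega>. Uf N y T x (b ## \<omega>)) = integral\<^sup>L S (\<lambda>\<omega>. sg y T x * Uf N y T (stp N x b) \<omega>)"
      using AE_not_NE[OF le] by (intro integral_cong_AE) (auto simp: Uf_Stream[OF y] elim!: AE_mp)
    then show ?thesis unfolding U_def by simp
  qed
  ultimately show ?thesis unfolding e stp_T[OF x] stp_F[OF x] q_def by (simp add: algebra_simps)
qed

end


context rw
begin

lemma compare:
  fixes u v s :: "nat \<Rightarrow> real" and \<epsilon> K \<rho> :: real
  assumes s: "\<And>z. \<bar>s z\<bar> = 1"
    and u_rec: "\<And>z. 0 < z \<Longrightarrow> z < N \<Longrightarrow> u z = s z * (p * u (z + 1) + q * u (z - 1))"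
    and v_rec: "\<And>z. 0 < z \<Longrightarrow> z < N \<Longrightarrow> \<bar>v z - s z * (p * v (z + 1) + q * v (z - 1))\<bar> \<le> \<epsilon> + K * \<rho> ^ z"
    and b0: "u 0 = v 0" and bN: "u N = v N"
    and \<rho>: "0 < \<rho>" "p * \<rho> + q / \<rho> < 1" and \<epsilon>: "0 \<le> \<epsilon>" and K: "0 \<le> K"
    and x: "x \<le> N"
  shows "\<bar>u x - v x\<bar> \<le> \<epsilon> * (real N - real x) / (p - q) + K / (1 - (p * \<rho> + q / \<rho>)) * \<rho> ^ x"
proof -
  define \<gamma> where "\<gamma> = p * \<rho> + q / \<rho>"
  define c where "c = K / (1 - \<gamma>)"
  have c0: "0 \<le> c" unfolding c_def \<gamma>_def using \<rho> K by simp
  have cK: "c * (1 - \<gamma>) = K" unfolding c_def \<gamma>_def using \<rho> by simp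
  have pq: "0 < p - q" using qp by simp
  define D where "D z = \<bar>u z - v z\<bar>" for z
  define H where "H z = D z - \<epsilon> * (real N - real z) / (p - q) - c * \<rho> ^ z" for z
  have Dsub: "D z \<le> p * D (z + 1) + q * D (z - 1) + \<epsilon> + K * \<rho> ^ z" if z: "0 < z" "z < N" for z
  proof -
    have "u z - v z = s z * (p * (u (z + 1) - v (z + 1)) + q * (u (z - 1) - v (z - 1)))
        - (v z - s z * (p * v (z + 1) + q * v (z - 1)))"
      using u_rec[OF z] by (simp add: algebra_simps)
    then have "\<bar>u z - v z\<bar> \<le> \<bar>s z * (p * (u (z + 1) - v (z + 1)) + q * (u (z - 1) - v (z - 1)))\<bar>
        + \<bar>v z - s z * (p * v (z + 1) + q * v (z - 1))\<bar>" by linarith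
    also have "\<bar>s z * (p * (u (z + 1) - v (z + 1)) + q * (u (z - 1) - v (z - 1)))\<bar>
        \<le> p * D (z + 1) + q * D (z - 1)"
    proof -
      have "\<bar>s z * (p * (u (z + 1) - v (z + 1)) + q * (u (z - 1) - v (z - 1)))\<bar>
          = \<bar>p * (u (z + 1) - v (z + 1)) + q * (u (z - 1) - v (z - 1))\<bar>" by (simp add: abs_mult s)
      also have "\<dots> \<le> \<bar>p * (u (z + 1) - v (z + 1))\<bar> + \<bar>q * (u (z - 1) - v (z - 1))\<bar>"
        by (rule abs_triangle_ineq)
      also have "\<dots> = p * D (z + 1) + q * D (z - 1)"
        unfolding D_def using p0 q0 by (simp add: abs_mult)
      finally show ?thesis .
    qed
    finally show ?thesis using v_rec[OF z] unfolding D_def by linarith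
  qed
  have Hsub: "H z \<le> p * H (z + 1) + q * H (z - 1)" if z: "0 < z" "z < N" for z
  proof -
    have lin: "p * (\<epsilon> * (real N - real (z + 1)) / (p - q)) + q * (\<epsilon> * (real N - real (z - 1)) / (p - q))
        = \<epsilon> * (real N - real z) / (p - q) - \<epsilon>"
    proof -
      have rz: "real (z - 1) = real z - 1" using z by simp
      have e1: "p * (real N - real (z + 1)) + q * (real N - real (z - 1)) = (p + q) * (real N - real z) - (p - q)"
        unfolding rz by (simp add: algebra_simps)
      have "p * (\<epsilon> * (real N - real (z + 1)) / (p - q)) + q * (\<epsilon> * (real N - real (z - 1)) / (p - q))
          = \<epsilon> * (p * (real N - real (z + 1)) + q * (real N - real (z - 1))) / (p - q)"
        by (simp add: algebra_simps add_divide_distrib diff_divide_distrib)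
      also have "\<dots> = \<epsilon> * ((real N - real z) - (p - q)) / (p - q)" unfolding e1 pq1 by simp
      also have "\<dots> = \<epsilon> * (real N - real z) / (p - q) - \<epsilon>" using pq by (simp add: field_simps)
      finally show ?thesis .
    qed
    have geo: "p * (c * \<rho> ^ (z + 1)) + q * (c * \<rho> ^ (z - 1)) = c * \<rho> ^ z - K * \<rho> ^ z"
    proof -
      have "\<rho> ^ (z - 1) = \<rho> ^ z / \<rho>" using z \<rho> by (simp add: power_diff)
      then have "p * (c * \<rho> ^ (z + 1)) + q * (c * \<rho> ^ (z - 1)) = c * \<gamma> * \<rho> ^ z"
        unfolding \<gamma>_def using \<rho> by (simp add: field_simps)
      also have "\<dots> = c * \<rho> ^ z - K * \<rho> ^ z"
      proof -
        have cg: "c * \<gamma> = c - K" using cK by (simp add: algebra_simps)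
        show ?thesis by (simp add: cg left_diff_distrib)
      qed
      finally show ?thesis .
    qed
    show ?thesis using Dsub[OF z] lin geo unfolding H_def by (simp add: algebra_simps)
  qed
  have "H x \<le> max (H 0) (H N)" by (rule maxprin[OF p0 q0 pq1 Hsub x]) auto
  moreover have "H 0 \<le> 0"
  proof -
    have "0 \<le> \<epsilon> * real N / (p - q)" using \<epsilon> pq by simp
    then show ?thesis unfolding H_def D_def using b0 c0 by simp
  qed
  moreover have "H N \<le> 0" unfolding H_def D_def using bN c0 \<rho> by simp
  ultimately have "H x \<le> 0" by linarith
  then show ?thesis unfolding H_def D_def c_def \<gamma>_def by simp
qed

end


context rw
begin

lemma L_prod_ident:
  fixes fp fm vp vm :: real
  shows "p * (fp * vp) + q * (fm * vm) = (p * fp + q * fm) * (p * vp + q * vm) + p * q * (fp - fm) * (vp - vm)"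
  unfolding q_def by (simp add: algebra_simps)

lemma prod_defect:
  fixes F :: "nat \<Rightarrow> nat \<Rightarrow> real" and \<sigma> :: "nat \<Rightarrow> nat \<Rightarrow> real" and T :: "nat set"
  assumes fin: "finite T"
    and Frec: "\<And>i z. i \<in> T \<Longrightarrow> 0 < z \<Longrightarrow> z < N \<Longrightarrow> F i z = \<sigma> i z * (p * F i (z + 1) + q * F i (z - 1))"
    and Fb: "\<And>i z. i \<in> T \<Longrightarrow> z \<le> N \<Longrightarrow> \<bar>F i z\<bar> \<le> 1"
    and \<sigma>1: "\<And>i z. i \<in> T \<Longrightarrow> \<bar>\<sigma> i z\<bar> = 1"
  shows "(\<forall>z\<le>N. \<bar>(\<Prod>i\<in>T. F i z)\<bar> \<le> 1) \<and>
    (\<forall>z. 0 < z \<and> z < N \<longrightarrow> \<bar>(\<Prod>i\<in>T. F i (z + 1)) - (\<Prod>i\<in>T. F i (z - 1))\<bar> \<le> (\<Sum>i\<in>T. \<bar>F i (z + 1) - F i (z - 1)\<bar>)) \<and>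
    (\<forall>z. 0 < z \<and> z < N \<longrightarrow> \<bar>(\<Prod>i\<in>T. F i z) - (\<Prod>i\<in>T. \<sigma> i z) * (p * (\<Prod>i\<in>T. F i (z + 1)) + q * (\<Prod>i\<in>T. F i (z - 1)))\<bar>
       \<le> p * q * ((\<Sum>i\<in>T. \<bar>F i (z + 1) - F i (z - 1)\<bar>)\<^sup>2 - (\<Sum>i\<in>T. \<bar>F i (z + 1) - F i (z - 1)\<bar>\<^sup>2)))"
  using fin Frec Fb \<sigma>1
proof (induction T rule: finite_induct)
  case empty
  then show ?case using pq1 by simp
next
  case (insert a T)
  define V where "V z = (\<Prod>i\<in>T. F i z)" for z
  define s where "s z = (\<Prod>i\<in>T. \<sigma> i z)" for z
  define e where "e i z = \<bar>F i (z + 1) - F i (z - 1)\<bar>" for i z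
  define E where "E z = (\<Sum>i\<in>T. e i z)" for z
  define Q where "Q z = (\<Sum>i\<in>T. (e i z)\<^sup>2)" for z
  have IH: "(\<forall>z\<le>N. \<bar>V z\<bar> \<le> 1) \<and> (\<forall>z. 0 < z \<and> z < N \<longrightarrow> \<bar>V (z + 1) - V (z - 1)\<bar> \<le> E z) \<and>
    (\<forall>z. 0 < z \<and> z < N \<longrightarrow> \<bar>V z - s z * (p * V (z + 1) + q * V (z - 1))\<bar> \<le> p * q * ((E z)\<^sup>2 - Q z))"
    unfolding V_def s_def E_def Q_def e_def using insert by auto
  have fa: "\<bar>F a z\<bar> \<le> 1" if "z \<le> N" for z using insert.prems(2)[of a z] that by simp
  have sa: "\<bar>\<sigma> a z\<bar> = 1" for z using insert.prems(3)[of a z] by simp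
  have sa2: "\<sigma> a z * \<sigma> a z = 1" for z using sa[of z] by (metis abs_mult_self_eq mult_1_left)
  have fr: "F a z = \<sigma> a z * (p * F a (z + 1) + q * F a (z - 1))" if "0 < z" "z < N" for z
    using insert.prems(1)[of a z] that by simp
  have ins_prod: "(\<Prod>i\<in>insert a T. g i) = g a * (\<Prod>i\<in>T. g i)" for g :: "nat \<Rightarrow> real"
    using insert.hyps by simp
  have ins_sum: "(\<Sum>i\<in>insert a T. g i) = g a + (\<Sum>i\<in>T. g i)" for g :: "nat \<Rightarrow> real"
    using insert.hyps by simp
  have P1: "\<forall>z\<le>N. \<bar>F a z * V z\<bar> \<le> 1"
  proof (intro allI impI)
    fix z assume z: "z \<le> N"
    have "\<bar>F a z * V z\<bar> = \<bar>F a z\<bar> * \<bar>V z\<bar>" by (simp add: abs_mult)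
    also have "\<dots> \<le> 1 * 1" using fa[OF z] IH z by (intro mult_mono) auto
    finally show "\<bar>F a z * V z\<bar> \<le> 1" by simp
  qed
  have P2: "\<bar>F a (z + 1) * V (z + 1) - F a (z - 1) * V (z - 1)\<bar> \<le> e a z + E z" if z: "0 < z" "z < N" for z
  proof -
    have "F a (z + 1) * V (z + 1) - F a (z - 1) * V (z - 1) =
        F a (z + 1) * (V (z + 1) - V (z - 1)) + V (z - 1) * (F a (z + 1) - F a (z - 1))"
      by (simp add: algebra_simps)
    also have "\<bar>\<dots>\<bar> \<le> \<bar>F a (z + 1)\<bar> * \<bar>V (z + 1) - V (z - 1)\<bar> + \<bar>V (z - 1)\<bar> * e a z"
      unfolding e_def by (metis abs_mult abs_triangle_ineq)
    also have "\<dots> \<le> 1 * E z + 1 * e a z"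
    proof (intro add_mono mult_mono)
      show "\<bar>F a (z + 1)\<bar> \<le> 1" using fa z by simp
      show "\<bar>V (z + 1) - V (z - 1)\<bar> \<le> E z" using IH z by simp
      show "\<bar>V (z - 1)\<bar> \<le> 1" using IH z by simp
    qed (auto simp: e_def)
    finally show ?thesis by simp
  qed
  have P3: "\<bar>F a z * V z - (\<sigma> a z * s z) * (p * (F a (z + 1) * V (z + 1)) + q * (F a (z - 1) * V (z - 1)))\<bar>
      \<le> p * q * ((e a z + E z)\<^sup>2 - ((e a z)\<^sup>2 + Q z))" if z: "0 < z" "z < N" for z
  proof -
    define Lf where "Lf = p * F a (z + 1) + q * F a (z - 1)"
    define LV where "LV = p * V (z + 1) + q * V (z - 1)"
    have Lf: "\<sigma> a z * Lf = F a z" unfolding Lf_def using fr[OF z] sa2[of z] by (simp add: algebra_simps)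
    have "(\<sigma> a z * s z) * (p * (F a (z + 1) * V (z + 1)) + q * (F a (z - 1) * V (z - 1)))
        = (\<sigma> a z * Lf) * (s z * LV) + \<sigma> a z * s z * (p * q * (F a (z + 1) - F a (z - 1)) * (V (z + 1) - V (z - 1)))"
      unfolding Lf_def LV_def L_prod_ident by (simp add: algebra_simps)
    also have "\<dots> = F a z * (s z * LV) + \<sigma> a z * s z * (p * q * (F a (z + 1) - F a (z - 1)) * (V (z + 1) - V (z - 1)))"
      unfolding Lf ..
    finally have eq: "F a z * V z - (\<sigma> a z * s z) * (p * (F a (z + 1) * V (z + 1)) + q * (F a (z - 1) * V (z - 1)))
        = F a z * (V z - s z * LV) - \<sigma> a z * s z * (p * q * (F a (z + 1) - F a (z - 1)) * (V (z + 1) - V (z - 1)))"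
      by (simp add: algebra_simps)
    have s1: "\<bar>s z\<bar> = 1" unfolding s_def abs_prod using insert.prems(3) by (intro prod.neutral) auto
    have "\<bar>F a z * (V z - s z * LV)\<bar> \<le> 1 * (p * q * ((E z)\<^sup>2 - Q z))"
      unfolding abs_mult LV_def using fa[of z] z IH
      by (intro mult_mono) auto
    moreover have "\<bar>\<sigma> a z * s z * (p * q * (F a (z + 1) - F a (z - 1)) * (V (z + 1) - V (z - 1)))\<bar>
        \<le> p * q * (e a z * E z)"
    proof -
      have "\<bar>\<sigma> a z * s z * (p * q * (F a (z + 1) - F a (z - 1)) * (V (z + 1) - V (z - 1)))\<bar>
          = p * q * (e a z * \<bar>V (z + 1) - V (z - 1)\<bar>)"
        unfolding e_def using sa[of z] s1 p0 q0 by (simp add: abs_mult)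
      also have "\<dots> \<le> p * q * (e a z * E z)"
        using IH z p0 q0 by (intro mult_left_mono) (auto simp: e_def)
      finally show ?thesis .
    qed
    moreover have "0 \<le> e a z * E z" unfolding e_def E_def by (auto intro!: sum_nonneg simp: e_def)
    moreover have "p * q * ((e a z + E z)\<^sup>2 - ((e a z)\<^sup>2 + Q z)) = p * q * ((E z)\<^sup>2 - Q z) + 2 * (p * q * (e a z * E z))"
      by (simp add: algebra_simps power2_eq_square)
    moreover have "0 \<le> p * q" using p0 q0 by simp
    ultimately show ?thesis unfolding eq
      by (smt (verit) abs_triangle_ineq4 mult_nonneg_nonneg)
  qed
  show ?case
    unfolding ins_prod ins_sum
    using P1 P2 P3 unfolding V_def s_def E_def Q_def e_def by auto
qed

end


context rw
begin

definition "rr = q / p"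

lemma rr0: "0 < rr" and rr1: "rr < 1" and prr: "p * rr = q" and qrr: "q / rr = p"
  using p0 q0 qp unfolding rr_def by (auto simp: field_simps)

lemma harm_pow: "0 < z \<Longrightarrow> p * rr ^ (z + 1) + q * rr ^ (z - 1) = rr ^ z"
proof -
  assume z: "0 < z"
  have a: "rr ^ (z + 1) = rr ^ z * rr" by simp
  have b: "rr ^ (z - 1) = rr ^ z / rr" using z rr0 by (simp add: power_diff)
  have "p * rr ^ (z + 1) + q * rr ^ (z - 1) = rr ^ z * (p * rr) + rr ^ z * (q / rr)"
    unfolding a b by (simp add: algebra_simps)
  also have "\<dots> = rr ^ z" unfolding prr qrr using pq1 by (simp add: distrib_left[symmetric])
  finally show ?thesis .
qed

lemma harm_aff: "0 < z \<Longrightarrow> p * (A + B * rr ^ (z + 1)) + q * (A + B * rr ^ (z - 1)) = A + B * rr ^ z"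
proof -
  assume z: "0 < z"
  have "p * (A + B * rr ^ (z + 1)) + q * (A + B * rr ^ (z - 1)) = (p + q) * A + B * (p * rr ^ (z + 1) + q * rr ^ (z - 1))"
    by (simp add: algebra_simps)
  then show ?thesis using harm_pow[OF z] pq1 by simp
qed

definition "phi t z = (1 - rr ^ z) / (1 - rr ^ t)"
definition "psi N t z = (rr ^ z - rr ^ N) / (rr ^ t - rr ^ N)"
definition "hh N t z = (if z \<le> t then phi t z else psi N t z)"
definition "RR N t = p * psi N t (t + 1) + q * phi t (t - 1)"
definition "aa N t = - 2 / (1 + RR N t)"
definition "ff N t z = 1 + aa N t * hh N t z"

lemma rt_lt1: "0 < t \<Longrightarrow> rr ^ t < 1" using rr0 rr1 by (simp add: power_less_one_iff)
lemma rt_le_r: "0 < t \<Longrightarrow> rr ^ t \<le> rr" using rr0 rr1 power_decreasing[of 1 t rr] by simp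
lemma rtN: "t < N \<Longrightarrow> rr ^ N < rr ^ t" using rr0 rr1 by (simp add: power_strict_decreasing)

lemma phi_aff: "0 < t \<Longrightarrow> phi t z = 1 / (1 - rr ^ t) + (- 1 / (1 - rr ^ t)) * rr ^ z"
  unfolding phi_def using rt_lt1[of t] by (simp add: field_simps)

lemma psi_aff: "t < N \<Longrightarrow> psi N t z = (- (rr ^ N) / (rr ^ t - rr ^ N)) + (1 / (rr ^ t - rr ^ N)) * rr ^ z"
  unfolding psi_def by (simp add: diff_divide_distrib)


lemma phi_harm: "0 < t \<Longrightarrow> 0 < z \<Longrightarrow> p * phi t (z + 1) + q * phi t (z - 1) = phi t z"
  unfolding phi_aff by (rule harm_aff)
lemma psi_harm: "t < N \<Longrightarrow> 0 < z \<Longrightarrow> p * psi N t (z + 1) + q * psi N t (z - 1) = psi N t z"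
  unfolding psi_aff by (rule harm_aff)

lemma phi_t: "0 < t \<Longrightarrow> phi t t = 1" unfolding phi_def using rt_lt1[of t] by simp
lemma psi_t: "t < N \<Longrightarrow> psi N t t = 1" unfolding psi_def using rtN[of t N] by simp
lemma psi_N: "t < N \<Longrightarrow> psi N t N = 0" unfolding psi_def by simp
lemma phi_0: "phi t 0 = 0" unfolding phi_def by simp

lemma hh_ge: "0 < t \<Longrightarrow> t < N \<Longrightarrow> t \<le> z \<Longrightarrow> hh N t z = psi N t z"
  unfolding hh_def using phi_t psi_t by auto

lemma phi_01: "0 < t \<Longrightarrow> z \<le> t \<Longrightarrow> 0 \<le> phi t z \<and> phi t z \<le> 1"
proof -
  assume t: "0 < t" and z: "z \<le> t"
  have "rr ^ t \<le> rr ^ z" using z rr0 rr1 by (simp add: power_decreasing)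
  moreover have "rr ^ z \<le> 1" using rr0 rr1 by (simp add: power_le_one)
  ultimately show ?thesis unfolding phi_def using rt_lt1[OF t] by (auto simp: divide_simps)
qed

lemma psi_01: "t < N \<Longrightarrow> t \<le> z \<Longrightarrow> z \<le> N \<Longrightarrow> 0 \<le> psi N t z \<and> psi N t z \<le> 1"
proof -
  assume t: "t < N" and z: "t \<le> z" "z \<le> N"
  have "rr ^ z \<le> rr ^ t" using z rr0 rr1 by (simp add: power_decreasing)
  moreover have "rr ^ N \<le> rr ^ z" using z rr0 rr1 by (simp add: power_decreasing)
  ultimately show ?thesis unfolding psi_def using rtN[OF t] by (auto simp: divide_simps)
qed

lemma hh_01: "0 < t \<Longrightarrow> t < N \<Longrightarrow> z \<le> N \<Longrightarrow> 0 \<le> hh N t z \<and> hh N t z \<le> 1"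
  using phi_01 psi_01 unfolding hh_def by auto

lemma RR_01: "0 < t \<Longrightarrow> t < N \<Longrightarrow> 0 \<le> RR N t \<and> RR N t \<le> 1"
proof -
  assume t: "0 < t" "t < N"
  have a: "0 \<le> psi N t (t + 1) \<and> psi N t (t + 1) \<le> 1" using psi_01[of t N "t + 1"] t by simp
  have b: "0 \<le> phi t (t - 1) \<and> phi t (t - 1) \<le> 1" using phi_01[of t "t - 1"] t by simp
  have "p * psi N t (t + 1) \<le> p * 1" using a p0 by (intro mult_left_mono) auto
  moreover have "q * phi t (t - 1) \<le> q * 1" using b q0 by (intro mult_left_mono) auto
  moreover have "0 \<le> p * psi N t (t + 1) + q * phi t (t - 1)" using a b p0 q0 by simp
  ultimately show ?thesis unfolding RR_def using pq1 by linarith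
qed

lemma aa_bounds: "0 < t \<Longrightarrow> t < N \<Longrightarrow> -2 \<le> aa N t \<and> aa N t \<le> -1"
proof -
  assume t: "0 < t" "t < N"
  from RR_01[OF t] show ?thesis unfolding aa_def by (auto simp: divide_simps)
qed

lemma ff_bound: "0 < t \<Longrightarrow> t < N \<Longrightarrow> z \<le> N \<Longrightarrow> \<bar>ff N t z\<bar> \<le> 1"
proof -
  assume t: "0 < t" "t < N" and z: "z \<le> N"
  have h: "0 \<le> hh N t z \<and> hh N t z \<le> 1" by (rule hh_01[OF t z])
  have a: "-2 \<le> aa N t \<and> aa N t \<le> -1" by (rule aa_bounds[OF t])
  have "aa N t * hh N t z \<le> 0" using h a by (simp add: mult_nonpos_nonneg)
  moreover have "-2 \<le> aa N t * hh N t z"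
  proof -
    have "-2 * hh N t z \<le> aa N t * hh N t z" using h a by (intro mult_right_mono) auto
    then show ?thesis using h by linarith
  qed
  ultimately show ?thesis unfolding ff_def by auto
qed

lemma ff_0: "0 < t \<Longrightarrow> ff N t 0 = 1" unfolding ff_def hh_def by (simp add: phi_0)
lemma ff_N: "0 < t \<Longrightarrow> t < N \<Longrightarrow> ff N t N = 1" unfolding ff_def hh_def using psi_N by simp

lemma ff_rec:
  assumes t: "0 < t" "t < N" and z: "0 < z" "z < N"
  shows "ff N t z = (if t = z then -1 else 1) * (p * ff N t (z + 1) + q * ff N t (z - 1))"
proof -
  define A where "A = hh N t (z + 1)"
  define B where "B = hh N t (z - 1)"
  have L: "p * ff N t (z + 1) + q * ff N t (z - 1) = 1 + aa N t * (p * A + q * B)"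
  proof -
    have "p * ff N t (z + 1) + q * ff N t (z - 1) = p * (1 + aa N t * A) + q * (1 + aa N t * B)"
      unfolding ff_def A_def B_def ..
    also have "\<dots> = (p + q) + aa N t * (p * A + q * B)" by (simp add: algebra_simps)
    finally show ?thesis using pq1 by simp
  qed
  show ?thesis
  proof (cases "z < t")
    case True
    then have "z + 1 \<le> t" "z - 1 \<le> t" by auto
    then have "p * A + q * B = hh N t z"
      unfolding hh_def A_def B_def using phi_harm[OF t(1) z(1)] True by simp
    then show ?thesis using True unfolding L by (simp add: ff_def)
  next
    case False
    show ?thesis
    proof (cases "z = t")
      case False
      then have "t \<le> z - 1" using \<open>\<not> z < t\<close> by simp
      then have "p * A + q * B = hh N t z"
        unfolding A_def B_def using hh_ge[OF t] psi_harm[OF t(2) z(1)] by simp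
      then show ?thesis using False unfolding L by (simp add: ff_def)
    next
      case True
      have R: "p * A + q * B = RR N t"
        unfolding RR_def hh_def A_def B_def True by simp
      have h: "hh N t z = 1" unfolding hh_def True using phi_t[OF t(1)] by simp
      have R0: "0 \<le> RR N t" using RR_01[OF t] by simp
      have "1 + aa N t = - (1 + aa N t * RR N t)"
        unfolding aa_def using R0 by (simp add: field_simps)
      moreover have "hh N t t = 1" using h True by simp
      ultimately show ?thesis unfolding L R using True by (simp add: ff_def)
    qed
  qed
qed

definition "dd z t = (if z \<le> t then t - z else z - t)"

lemma C_pos: "0 < rr * (1 - rr)" using rr0 rr1 by simp

lemma C_ge1: "1 \<le> 1 / (rr * (1 - rr))"
proof -
  have "rr * (1 - rr) \<le> 1" using rr0 rr1 by (simp add: mult_le_one)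
  then show ?thesis using C_pos by (simp add: divide_simps)
qed

lemma hh_delta:
  assumes t: "0 < t" "t < N" and z: "0 < z" "z < N"
  shows "\<bar>hh N t (z + 1) - hh N t (z - 1)\<bar> \<le> (rr ^ z + rr ^ dd z t) / (rr * (1 - rr))"
proof -
  have rz1: "rr ^ (z - 1) = rr ^ z / rr" using z rr0 by (simp add: power_diff)
  have num: "0 \<le> rr ^ (z - 1) - rr ^ (z + 1)" "rr ^ (z - 1) - rr ^ (z + 1) \<le> rr ^ z / rr"
  proof -
    have "rr ^ (z + 1) \<le> rr ^ (z - 1)" using rr0 rr1 by (intro power_decreasing) auto
    then show "0 \<le> rr ^ (z - 1) - rr ^ (z + 1)" by simp
    show "rr ^ (z - 1) - rr ^ (z + 1) \<le> rr ^ z / rr" using rz1 rr0 by simp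
  qed
  have nn: "0 \<le> rr ^ n" for n using rr0 by simp
  show ?thesis
  proof (cases "z < t")
    case True
    then have le: "z + 1 \<le> t" "z - 1 \<le> t" by auto
    have d1: "1 - rr \<le> 1 - rr ^ t" using rt_le_r[OF t(1)] by simp
    have e: "hh N t (z + 1) - hh N t (z - 1) = (rr ^ (z - 1) - rr ^ (z + 1)) / (1 - rr ^ t)"
      unfolding hh_def phi_def using le by (simp add: diff_divide_distrib)
    have "\<bar>hh N t (z + 1) - hh N t (z - 1)\<bar> = (rr ^ (z - 1) - rr ^ (z + 1)) / (1 - rr ^ t)"
      unfolding e using num rt_lt1[OF t(1)] by simp
    also have "\<dots> \<le> (rr ^ z / rr) / (1 - rr)"
      using num rr1 d1 by (intro frac_le) auto
    also have "\<dots> = rr ^ z / (rr * (1 - rr))" by simp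
    also have "\<dots> \<le> (rr ^ z + rr ^ dd z t) / (rr * (1 - rr))"
      using C_pos nn by (intro divide_right_mono) auto
    finally show ?thesis .
  next
    case False
    show ?thesis
    proof (cases "z = t")
      case True
      have a: "0 \<le> hh N t (z + 1) \<and> hh N t (z + 1) \<le> 1" using hh_01[OF t] z by simp
      have b: "0 \<le> hh N t (z - 1) \<and> hh N t (z - 1) \<le> 1" using hh_01[OF t] z by simp
      have "\<bar>hh N t (z + 1) - hh N t (z - 1)\<bar> \<le> 1" using a b by auto
      also have "\<dots> \<le> 1 / (rr * (1 - rr))" by (rule C_ge1)
      also have "\<dots> \<le> (rr ^ z + rr ^ dd z t) / (rr * (1 - rr))"
        using C_pos True nn[of z] by (intro divide_right_mono) (auto simp: dd_def)
      finally show ?thesis .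
    next
      case False
      then have zt: "t < z" using \<open>\<not> z < t\<close> by simp
      then have le: "t \<le> z + 1" "t \<le> z - 1" by auto
      have rtN': "rr ^ N = rr ^ t * rr ^ (N - t)" using t by (simp add: power_add[symmetric])
      have d1: "rr ^ t * (1 - rr) \<le> rr ^ t - rr ^ N"
      proof -
        have "rr ^ (N - t) \<le> rr" using rt_le_r[of "N - t"] t by simp
        then have "rr ^ t * rr ^ (N - t) \<le> rr ^ t * rr" using nn by (intro mult_left_mono) auto
        then show ?thesis unfolding rtN' by (simp add: algebra_simps)
      qed
      have pos: "0 < rr ^ t * (1 - rr)" using rr0 rr1 by simp
      have e: "hh N t (z + 1) - hh N t (z - 1) = - ((rr ^ (z - 1) - rr ^ (z + 1)) / (rr ^ t - rr ^ N))"
        unfolding hh_ge[OF t le(1)] hh_ge[OF t le(2)] psi_def by (simp add: diff_divide_distrib)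
      have "\<bar>hh N t (z + 1) - hh N t (z - 1)\<bar> = (rr ^ (z - 1) - rr ^ (z + 1)) / (rr ^ t - rr ^ N)"
        unfolding e using num rtN[OF t(2)] by simp
      also have "\<dots> \<le> (rr ^ z / rr) / (rr ^ t * (1 - rr))"
        using num d1 pos by (intro frac_le) auto
      also have "\<dots> = rr ^ (z - t) / (rr * (1 - rr))"
      proof -
        have "rr ^ z = rr ^ (z - t) * rr ^ t" using zt by (simp add: power_add[symmetric])
        then show ?thesis using rr0 rr1 by (simp add: field_simps)
      qed
      also have "\<dots> \<le> (rr ^ z + rr ^ dd z t) / (rr * (1 - rr))"
        using C_pos nn zt by (intro divide_right_mono) (auto simp: dd_def)
      finally show ?thesis .
    qed
  qed
qed

lemma ff_delta:
  assumes t: "0 < t" "t < N" and z: "0 < z" "z < N"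
  shows "\<bar>ff N t (z + 1) - ff N t (z - 1)\<bar> \<le> 2 * ((rr ^ z + rr ^ dd z t) / (rr * (1 - rr)))"
proof -
  have "ff N t (z + 1) - ff N t (z - 1) = aa N t * (hh N t (z + 1) - hh N t (z - 1))"
    unfolding ff_def by (simp add: algebra_simps)
  then have "\<bar>ff N t (z + 1) - ff N t (z - 1)\<bar> = \<bar>aa N t\<bar> * \<bar>hh N t (z + 1) - hh N t (z - 1)\<bar>"
    by (simp add: abs_mult)
  also have "\<dots> \<le> 2 * ((rr ^ z + rr ^ dd z t) / (rr * (1 - rr)))"
    using aa_bounds[OF t] hh_delta[OF t z] by (intro mult_mono) auto
  finally show ?thesis .
qed

end


context rw
begin

lemma dd_tri: "dd (t::nat) t' \<le> dd z t + dd z t'"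
  unfolding dd_def by (auto split: nat_diff_split)

lemma pair_bound: "(rr ^ z + rr ^ dd z t) * (rr ^ z + rr ^ dd z t') \<le> 3 * rr ^ z + rr ^ dd t t'"
proof -
  have le1: "rr ^ n \<le> 1" for n using rr0 rr1 by (simp add: power_le_one)
  have nn: "0 \<le> rr ^ n" for n using rr0 by simp
  have a: "rr ^ z * rr ^ z \<le> rr ^ z" using le1 nn by (simp add: mult_left_le)
  have b: "rr ^ z * rr ^ n \<le> rr ^ z" for n using le1 nn by (simp add: mult_right_le_one_le)
  have c: "rr ^ n * rr ^ z \<le> rr ^ z" for n using le1 nn by (simp add: mult_left_le_one_le)
  have d: "rr ^ dd z t * rr ^ dd z t' \<le> rr ^ dd t t'"
    unfolding power_add[symmetric] using rr0 rr1 dd_tri by (intro power_decreasing) auto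
  have "(rr ^ z + rr ^ dd z t) * (rr ^ z + rr ^ dd z t') =
     rr ^ z * rr ^ z + rr ^ z * rr ^ dd z t' + rr ^ dd z t * rr ^ z + rr ^ dd z t * rr ^ dd z t'"
    by (simp add: algebra_simps)
  also have "\<dots> \<le> 3 * rr ^ z + rr ^ dd t t'" using a b[of "dd z t'"] c[of "dd z t"] d by linarith
  finally show ?thesis .
qed

lemma sq_minus_sq:
  fixes e :: "nat \<Rightarrow> real"
  assumes "finite T"
  shows "(\<Sum>i\<in>T. e i)\<^sup>2 - (\<Sum>i\<in>T. (e i)\<^sup>2) = (\<Sum>i\<in>T. \<Sum>j\<in>T - {i}. e i * e j)"
proof -
  have "(\<Sum>i\<in>T. e i)\<^sup>2 = (\<Sum>i\<in>T. \<Sum>j\<in>T. e i * e j)" by (simp add: power2_eq_square sum_product)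
  also have "\<dots> = (\<Sum>i\<in>T. (e i)\<^sup>2 + (\<Sum>j\<in>T - {i}. e i * e j))"
    using assms by (intro sum.cong refl) (simp add: sum.remove power2_eq_square)
  finally show ?thesis by (simp add: sum.distrib)
qed

definition "rho = (1 + rr) / 2"

lemma rho: "0 < rho" "rho < 1" "rr \<le> rho" "p * rho + q / rho < 1"
proof -
  show "0 < rho" "rho < 1" "rr \<le> rho" unfolding rho_def using rr0 rr1 by auto
  have a: "rho - 1 < 0" unfolding rho_def using rr1 by simp
  have b: "0 < p * rho - q" unfolding rho_def using prr rr1 p0 qp by (simp add: algebra_simps)
  have "(rho - 1) * (p * rho - q) < 0" using a b by (simp add: mult_neg_pos)
  moreover have "p * rho + q * rho = rho" using pq1 by (simp add: distrib_right[symmetric])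
  ultimately have "p * rho * rho - rho + q < 0" by (simp add: algebra_simps)
  then have "(p * rho * rho + q) / rho < 1" using \<open>0 < rho\<close> by (simp add: divide_simps)
  then show "p * rho + q / rho < 1" using \<open>0 < rho\<close> by (simp add: add_divide_distrib)
qed

definition "C2 = (2 / (rr * (1 - rr)))\<^sup>2"
definition "epsN (y :: nat \<Rightarrow> nat) T = p * q * C2 * (\<Sum>i\<in>T. \<Sum>j\<in>T - {i}. rr ^ dd (y i) (y j))"
definition "KK T = 3 * p * q * C2 * (real (card T))\<^sup>2"

lemma approx:
  assumes fin: "finite T" and y: "\<And>i. i \<in> T \<Longrightarrow> 0 < y i \<and> y i < N" and x: "x \<le> N"
  shows "\<bar>U N y T x - (\<Prod>i\<in>T. ff N (y i) x)\<bar>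
     \<le> epsN y T * (real N - real x) / (p - q) + KK T / (1 - (p * rho + q / rho)) * rho ^ x"
proof -
  define V where "V z = (\<Prod>i\<in>T. ff N (y i) z)" for z
  have C2: "0 \<le> C2" unfolding C2_def by simp
  have PD: "\<forall>z. 0 < z \<and> z < N \<longrightarrow> \<bar>V z - (\<Prod>i\<in>T. if y i = z then -1 else 1) * (p * V (z + 1) + q * V (z - 1))\<bar>
       \<le> p * q * ((\<Sum>i\<in>T. \<bar>ff N (y i) (z + 1) - ff N (y i) (z - 1)\<bar>)\<^sup>2 - (\<Sum>i\<in>T. \<bar>ff N (y i) (z + 1) - ff N (y i) (z - 1)\<bar>\<^sup>2))"
  proof -
    have Fr: "ff N (y i) z = (if y i = z then -1 else 1) * (p * ff N (y i) (z + 1) + q * ff N (y i) (z - 1))"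
      if "i \<in> T" "0 < z" "z < N" for i z using y[OF that(1)] that(2,3) by (intro ff_rec) auto
    have Fb: "\<bar>ff N (y i) z\<bar> \<le> 1" if "i \<in> T" "z \<le> N" for i z using y[OF that(1)] that(2) by (intro ff_bound) auto
    have s1: "\<bar>(if y i = z then -1 else 1 :: real)\<bar> = 1" for i z by simp
    from prod_defect[of T N "\<lambda>i z. ff N (y i) z" "\<lambda>i z. if y i = z then -1 else 1", OF fin Fr Fb s1]
    show ?thesis unfolding V_def by blast
  qed
  have vrec: "\<bar>V z - sg y T z * (p * V (z + 1) + q * V (z - 1))\<bar> \<le> epsN y T + KK T * rho ^ z"
    if z: "0 < z" "z < N" for z
  proof -
    define e where "e i = \<bar>ff N (y i) (z + 1) - ff N (y i) (z - 1)\<bar>" for i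
    have eb: "e i \<le> 2 * ((rr ^ z + rr ^ dd z (y i)) / (rr * (1 - rr)))" if "i \<in> T" for i
      unfolding e_def using ff_delta[of "y i" N z] y[OF that] z by simp
    have e0: "0 \<le> e i" for i unfolding e_def by simp
    have pairs: "e i * e j \<le> C2 * (3 * rr ^ z + rr ^ dd (y i) (y j))" if "i \<in> T" "j \<in> T" for i j
    proof -
      have "e i * e j \<le> (2 * ((rr ^ z + rr ^ dd z (y i)) / (rr * (1 - rr)))) * (2 * ((rr ^ z + rr ^ dd z (y j)) / (rr * (1 - rr))))"
      proof (intro mult_mono)
        have "0 < rr * (1 - rr)" by (rule C_pos)
        moreover have "0 \<le> rr ^ z + rr ^ dd z (y i)" using rr0 by simp
        ultimately show "0 \<le> 2 * ((rr ^ z + rr ^ dd z (y i)) / (rr * (1 - rr)))" by simp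
      qed (use eb[OF that(1)] eb[OF that(2)] e0 in auto)
      also have "\<dots> = C2 * ((rr ^ z + rr ^ dd z (y i)) * (rr ^ z + rr ^ dd z (y j)))"
        unfolding C2_def by (simp add: power2_eq_square field_simps)
      also have "\<dots> \<le> C2 * (3 * rr ^ z + rr ^ dd (y i) (y j))"
        using C2 pair_bound by (intro mult_left_mono) auto
      finally show ?thesis .
    qed
    have "(\<Sum>i\<in>T. \<Sum>j\<in>T - {i}. e i * e j) \<le> (\<Sum>i\<in>T. \<Sum>j\<in>T - {i}. C2 * (3 * rr ^ z + rr ^ dd (y i) (y j)))"
      using pairs by (intro sum_mono) auto
    also have "\<dots> = (\<Sum>i\<in>T. \<Sum>j\<in>T - {i}. 3 * C2 * rr ^ z) + C2 * (\<Sum>i\<in>T. \<Sum>j\<in>T - {i}. rr ^ dd (y i) (y j))"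
      by (simp add: sum.distrib sum_distrib_left algebra_simps)
    also have "(\<Sum>i\<in>T. \<Sum>j\<in>T - {i}. 3 * C2 * rr ^ z) \<le> (\<Sum>i\<in>T. \<Sum>j\<in>T. 3 * C2 * rho ^ z)"
    proof (intro sum_mono)
      fix i assume "i \<in> T"
      have "(\<Sum>j\<in>T - {i}. 3 * C2 * rr ^ z) \<le> (\<Sum>j\<in>T - {i}. 3 * C2 * rho ^ z)"
        using C2 rr0 rho by (intro sum_mono mult_left_mono power_mono) auto
      also have "\<dots> \<le> (\<Sum>j\<in>T. 3 * C2 * rho ^ z)"
        using C2 rho fin by (intro sum_mono2) auto
      finally show "(\<Sum>j\<in>T - {i}. 3 * C2 * rr ^ z) \<le> (\<Sum>j\<in>T. 3 * C2 * rho ^ z)" .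
    qed
    also have "(\<Sum>i\<in>T. \<Sum>j\<in>T. 3 * C2 * rho ^ z) = 3 * C2 * (real (card T))\<^sup>2 * rho ^ z"
      by (simp add: power2_eq_square)
    finally have G: "(\<Sum>i\<in>T. \<Sum>j\<in>T - {i}. e i * e j) \<le> 3 * C2 * (real (card T))\<^sup>2 * rho ^ z + C2 * (\<Sum>i\<in>T. \<Sum>j\<in>T - {i}. rr ^ dd (y i) (y j))"
      by simp
    have "\<bar>V z - sg y T z * (p * V (z + 1) + q * V (z - 1))\<bar> \<le> p * q * ((\<Sum>i\<in>T. e i)\<^sup>2 - (\<Sum>i\<in>T. (e i)\<^sup>2))"
      using PD z unfolding sg_def e_def by simp
    also have "\<dots> = p * q * (\<Sum>i\<in>T. \<Sum>j\<in>T - {i}. e i * e j)" using sq_minus_sq[OF fin] by simp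
    also have "\<dots> \<le> p * q * (3 * C2 * (real (card T))\<^sup>2 * rho ^ z + C2 * (\<Sum>i\<in>T. \<Sum>j\<in>T - {i}. rr ^ dd (y i) (y j)))"
      using G p0 q0 by (intro mult_left_mono) auto
    also have "\<dots> = epsN y T + KK T * rho ^ z" unfolding epsN_def KK_def by (simp add: algebra_simps)
    finally show ?thesis .
  qed
  have eps0: "0 \<le> epsN y T" unfolding epsN_def using p0 q0 C2 rr0 by (auto intro!: sum_nonneg mult_nonneg_nonneg)
  have K0: "0 \<le> KK T" unfolding KK_def using p0 q0 C2 by simp
  have "\<bar>U N y T x - V x\<bar> \<le> epsN y T * (real N - real x) / (p - q) + KK T / (1 - (p * rho + q / rho)) * rho ^ x"
  proof (rule compare[where s="sg y T"])
    show "\<bar>sg y T z\<bar> = 1" for z by (rule abs_sg)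
    show "U N y T z = sg y T z * (p * U N y T (z + 1) + q * U N y T (z - 1))" if "0 < z" "z < N" for z
      using U_rec[of T y N z] y that by simp
    show "\<bar>V z - sg y T z * (p * V (z + 1) + q * V (z - 1))\<bar> \<le> epsN y T + KK T * rho ^ z" if "0 < z" "z < N" for z
      using vrec that by simp
    show "U N y T 0 = V 0" using U_bdry[of T y N 0] y ff_0 unfolding V_def by simp
    show "U N y T N = V N" using U_bdry[of T y N N] y ff_N unfolding V_def by simp
  qed (use rho eps0 K0 x in auto)
  then show ?thesis unfolding V_def .
qed

end


lemma filterlim_lin:
  fixes g :: "nat \<Rightarrow> nat"
  assumes c: "0 < c" and g: "\<And>N. c * real N - d \<le> real (g N)"
  shows "filterlim g at_top sequentially"
proof (subst filterlim_at_top, intro allI)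
  fix Z :: nat
  show "eventually (\<lambda>N. Z \<le> g N) sequentially"
    unfolding eventually_sequentially
  proof (intro exI allI impI)
    fix N assume N: "nat \<lceil>(real Z + d) / c\<rceil> \<le> N"
    then have "(real Z + d) / c \<le> real N" by linarith
    then have "real Z + d \<le> c * real N" using c by (simp add: field_simps)
    then have "real Z \<le> real (g N)" using g[of N] by linarith
    then show "Z \<le> g N" by simp
  qed
qed

lemma n_pow_lin_zero:
  fixes g :: "nat \<Rightarrow> nat" and r :: real
  assumes r: "0 < r" "r < 1" and c: "0 < c" and g: "\<And>N. c * real N - d \<le> real (g N)"
  shows "(\<lambda>N. real N * r ^ g N) \<longlonglongrightarrow> 0"
proof -
  define \<theta> where "\<theta> = r powr c"
  have \<theta>: "0 < \<theta>" "\<theta> < 1" unfolding \<theta>_def using r c powr_less_mono2[of c r 1] by auto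
  have b: "real N * r ^ g N \<le> r powr (- d) * (real N * \<theta> ^ N)" for N
  proof -
    have "r ^ g N = r powr real (g N)" using r by (simp add: powr_realpow)
    also have "\<dots> \<le> r powr (c * real N - d)" using g[of N] r by (intro powr_mono') auto
    also have "\<dots> = r powr (- d) * \<theta> ^ N"
      unfolding \<theta>_def using r by (simp add: powr_add[symmetric] powr_powr powr_realpow[symmetric] algebra_simps)
    finally show ?thesis by (simp add: mult_left_mono algebra_simps)
  qed
  have lim: "(\<lambda>N. r powr (- d) * (real N * \<theta> ^ N)) \<longlonglongrightarrow> r powr (- d) * 0"
    by (intro tendsto_mult tendsto_const powser_times_n_limit_0) (use \<theta> in simp)
  have ev: "eventually (\<lambda>N. norm (real N * r ^ g N) \<le> r powr (- d) * (real N * \<theta> ^ N)) sequentially"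
  proof (rule always_eventually, intro allI)
    fix N
    have "norm (real N * r ^ g N) = real N * r ^ g N" using r by simp
    then show "norm (real N * r ^ g N) \<le> r powr (- d) * (real N * \<theta> ^ N)" using b[of N] by simp
  qed
  show ?thesis using Lim_null_comparison[OF ev] lim by simp
qed

lemma real_nat_floor: "0 \<le> \<beta> \<Longrightarrow> \<beta> * real N - 1 \<le> real (nat \<lfloor>\<beta> * real N\<rfloor>) \<and> real (nat \<lfloor>\<beta> * real N\<rfloor>) \<le> \<beta> * real N"
  by (auto simp: of_nat_nat)

lemma real_diff_le: "real m - real n \<le> real (m - n)"
  by (cases "n \<le> m") (auto simp: of_nat_diff)


locale rw2 = rw +
  fixes \<alpha> :: real and a :: "nat \<Rightarrow> real" and k :: nat
  assumes \<alpha>0: "0 < \<alpha>" and \<alpha>1: "\<alpha> < a 1"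
    and mono: "\<And>i. 1 \<le> i \<Longrightarrow> i < k \<Longrightarrow> a i < a (Suc i)"
    and last: "a k < 1" and k1: "1 \<le> k"
begin

definition "xN N = nat \<lfloor>\<alpha> * real N\<rfloor>"
definition "yN N i = nat \<lfloor>a i * real N\<rfloor>"

lemma a_mono: "1 \<le> i \<Longrightarrow> i < j \<Longrightarrow> j \<le> k \<Longrightarrow> a i < a j"
proof (induction j)
  case 0 then show ?case by simp
next
  case (Suc j)
  show ?case
  proof (cases "i = j")
    case True then show ?thesis using mono[of j] Suc.prems by simp
  next
    case False
    then have "a i < a j" using Suc by simp
    also have "a j < a (Suc j)" using mono[of j] Suc.prems False by simp
    finally show ?thesis .
  qed
qed

lemma a_le: "1 \<le> i \<Longrightarrow> i \<le> j \<Longrightarrow> j \<le> k \<Longrightarrow> a i \<le> a j"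
  using a_mono[of i j] by (cases "i = j") auto

lemma a_bounds: "i \<in> {1..k} \<Longrightarrow> \<alpha> < a i \<and> a i < 1"
proof -
  assume i: "i \<in> {1..k}"
  have "a 1 \<le> a i" using a_le[of 1 i] i by simp
  moreover have "a i \<le> a k" using a_le[of i k] i by simp
  ultimately show ?thesis using \<alpha>1 last by simp
qed

lemma a_pos: "i \<in> {1..k} \<Longrightarrow> 0 < a i" using a_bounds \<alpha>0 by force

lemma xN_lb: "\<alpha> * real N - 1 \<le> real (xN N)" and xN_ub: "real (xN N) \<le> \<alpha> * real N"
  unfolding xN_def using real_nat_floor[of \<alpha> N] \<alpha>0 by auto

lemma yN_lb: "i \<in> {1..k} \<Longrightarrow> a i * real N - 1 \<le> real (yN N i)"
  unfolding yN_def using real_nat_floor[of "a i" N] a_pos[of i] by simp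
lemma yN_ub: "i \<in> {1..k} \<Longrightarrow> real (yN N i) \<le> a i * real N"
  unfolding yN_def using real_nat_floor[of "a i" N] a_pos[of i] by simp

lemma lim_xN: "filterlim xN at_top sequentially"
  by (rule filterlim_lin[where c=\<alpha> and d=1]) (use \<alpha>0 xN_lb in auto)

lemma lim_yN: "i \<in> {1..k} \<Longrightarrow> filterlim (\<lambda>N. yN N i) at_top sequentially"
  by (rule filterlim_lin[where c="a i" and d=1]) (use a_pos yN_lb in auto)

lemma lim_yN1: "i \<in> {1..k} \<Longrightarrow> filterlim (\<lambda>N. yN N i - 1) at_top sequentially"
proof (rule filterlim_lin[where c="a i" and d=2])
  assume i: "i \<in> {1..k}"
  show "0 < a i" using a_pos[OF i] .
  fix N
  have "real (yN N i) - real 1 \<le> real (yN N i - 1)" by (rule real_diff_le)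
  then show "a i * real N - 2 \<le> real (yN N i - 1)" using yN_lb[OF i, of N] by simp
qed

lemma lim_NyN: "i \<in> {1..k} \<Longrightarrow> filterlim (\<lambda>N. N - yN N i) at_top sequentially"
proof (rule filterlim_lin[where c="1 - a i" and d=0])
  assume i: "i \<in> {1..k}"
  show "0 < 1 - a i" using a_bounds[OF i] by simp
  fix N
  have "real N - real (yN N i) \<le> real (N - yN N i)" by (rule real_diff_le)
  then show "(1 - a i) * real N - 0 \<le> real (N - yN N i)" using yN_ub[OF i, of N] by (simp add: algebra_simps)
qed

lemma lim_yNxN: "i \<in> {1..k} \<Longrightarrow> filterlim (\<lambda>N. yN N i - xN N) at_top sequentially"
proof (rule filterlim_lin[where c="a i - \<alpha>" and d=1])
  assume i: "i \<in> {1..k}"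
  show "0 < a i - \<alpha>" using a_bounds[OF i] by simp
  fix N
  have "real (yN N i) - real (xN N) \<le> real (yN N i - xN N)" by (rule real_diff_le)
  then show "(a i - \<alpha>) * real N - 1 \<le> real (yN N i - xN N)"
    using yN_lb[OF i, of N] xN_ub[of N] by (simp add: algebra_simps)
qed

lemma ev_ge1: "filterlim g at_top sequentially \<Longrightarrow> eventually (\<lambda>N. 1 \<le> (g N :: nat)) sequentially"
  by (simp add: filterlim_at_top)

lemma ev_pos: "i \<in> {1..k} \<Longrightarrow> eventually (\<lambda>N. 0 < xN N \<and> xN N < yN N i \<and> yN N i < N) sequentially"
proof -
  assume i: "i \<in> {1..k}"
  have "eventually (\<lambda>N. 1 \<le> xN N) sequentially" by (rule ev_ge1[OF lim_xN])
  moreover have "eventually (\<lambda>N. 1 \<le> yN N i - xN N) sequentially" by (rule ev_ge1[OF lim_yNxN[OF i]])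
  moreover have "eventually (\<lambda>N. 1 \<le> N - yN N i) sequentially" by (rule ev_ge1[OF lim_NyN[OF i]])
  ultimately show ?thesis by eventually_elim auto
qed

definition "cc = 1 + (- 2 / (1 + (p * rr + q))) * 1"

lemma ff_lim: "i \<in> {1..k} \<Longrightarrow> (\<lambda>N. ff N (yN N i) (xN N)) \<longlonglongrightarrow> cc"
proof -
  assume i: "i \<in> {1..k}"
  define F where "F N = 1 + (- 2 / (1 + (p * ((rr - rr ^ (N - yN N i)) / (1 - rr ^ (N - yN N i)))
      + q * ((1 - rr ^ (yN N i - 1)) / (1 - rr ^ yN N i))))) * ((1 - rr ^ xN N) / (1 - rr ^ yN N i))" for N
  have z1: "(\<lambda>N. rr ^ (N - yN N i)) \<longlonglongrightarrow> 0" by (rule tendsto_power_zero[OF lim_NyN[OF i]]) (use rr0 rr1 in simp)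
  have z2: "(\<lambda>N. rr ^ (yN N i - 1)) \<longlonglongrightarrow> 0" by (rule tendsto_power_zero[OF lim_yN1[OF i]]) (use rr0 rr1 in simp)
  have z3: "(\<lambda>N. rr ^ (yN N i)) \<longlonglongrightarrow> 0" by (rule tendsto_power_zero[OF lim_yN[OF i]]) (use rr0 rr1 in simp)
  have z4: "(\<lambda>N. rr ^ (xN N)) \<longlonglongrightarrow> 0" by (rule tendsto_power_zero[OF lim_xN]) (use rr0 rr1 in simp)
  have den: "1 + (p * ((rr - 0) / (1 - 0)) + q * ((1 - 0) / (1 - 0))) \<noteq> 0"
  proof -
    have "0 < p * rr" using p0 rr0 by simp
    then show ?thesis using q0 by simp
  qed
  have "F \<longlonglongrightarrow> 1 + (- 2 / (1 + (p * ((rr - 0) / (1 - 0)) + q * ((1 - 0) / (1 - 0))))) * ((1 - 0) / (1 - 0))"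
  proof -
    have A: "(\<lambda>N. (rr - rr ^ (N - yN N i)) / (1 - rr ^ (N - yN N i))) \<longlonglongrightarrow> (rr - 0) / (1 - 0)"
      by (rule tendsto_divide[OF tendsto_diff[OF tendsto_const z1] tendsto_diff[OF tendsto_const z1]]) simp
    have B: "(\<lambda>N. (1 - rr ^ (yN N i - 1)) / (1 - rr ^ yN N i)) \<longlonglongrightarrow> (1 - 0) / (1 - 0)"
      by (rule tendsto_divide[OF tendsto_diff[OF tendsto_const z2] tendsto_diff[OF tendsto_const z3]]) simp
    have C: "(\<lambda>N. (1 - rr ^ xN N) / (1 - rr ^ yN N i)) \<longlonglongrightarrow> (1 - 0) / (1 - 0)"
      by (rule tendsto_divide[OF tendsto_diff[OF tendsto_const z4] tendsto_diff[OF tendsto_const z3]]) simp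
    have D: "(\<lambda>N. 1 + (p * ((rr - rr ^ (N - yN N i)) / (1 - rr ^ (N - yN N i)))
      + q * ((1 - rr ^ (yN N i - 1)) / (1 - rr ^ yN N i)))) \<longlonglongrightarrow> 1 + (p * ((rr - 0) / (1 - 0)) + q * ((1 - 0) / (1 - 0)))"
      by (intro tendsto_add tendsto_mult tendsto_const A B)
    have E: "(\<lambda>N. - 2 / (1 + (p * ((rr - rr ^ (N - yN N i)) / (1 - rr ^ (N - yN N i)))
      + q * ((1 - rr ^ (yN N i - 1)) / (1 - rr ^ yN N i))))) \<longlonglongrightarrow> - 2 / (1 + (p * ((rr - 0) / (1 - 0)) + q * ((1 - 0) / (1 - 0))))"
      by (rule tendsto_divide[OF tendsto_const D den])
    show ?thesis unfolding F_def by (intro tendsto_add tendsto_mult tendsto_const E C)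
  qed
  then have limF: "F \<longlonglongrightarrow> cc" unfolding cc_def by simp
  have "eventually (\<lambda>N. F N = ff N (yN N i) (xN N)) sequentially"
    using ev_pos[OF i]
  proof eventually_elim
    case (elim N)
    define t where "t = yN N i"
    define x where "x = xN N"
    have t: "0 < t" "t < N" and x: "x \<le> t" using elim unfolding t_def x_def by auto
    have rt: "0 < rr ^ t" using rr0 by simp
    have psi1: "psi N t (t + 1) = (rr - rr ^ (N - t)) / (1 - rr ^ (N - t))"
    proof -
      have "rr ^ N = rr ^ t * rr ^ (N - t)" using t by (simp add: power_add[symmetric])
      moreover have "rr ^ (t + 1) = rr ^ t * rr" by simp
      ultimately have "psi N t (t + 1) = (rr ^ t * (rr - rr ^ (N - t))) / (rr ^ t * (1 - rr ^ (N - t)))"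
        unfolding psi_def by (simp add: algebra_simps)
      also have "\<dots> = (rr - rr ^ (N - t)) / (1 - rr ^ (N - t))"
        by (rule mult_divide_mult_cancel_left) (use rr0 in simp)
      finally show ?thesis .
    qed
    have "ff N t x = F N"
      unfolding F_def t_def[symmetric] x_def[symmetric] ff_def aa_def RR_def psi1 hh_def phi_def using x by simp
    then show ?case unfolding t_def x_def by simp
  qed
  then show ?thesis using limF by (rule Lim_transform_eventually[rotated])
qed

lemma dd_ge1: "real t' - real t \<le> real (dd t t')" and dd_ge2: "real t - real t' \<le> real (dd t t')"
  unfolding dd_def by (auto simp: of_nat_diff)

lemma pair_lim:
  assumes i: "i \<in> {1..k}" and j: "j \<in> {1..k}" and ij: "i \<noteq> j"
  shows "(\<lambda>N. real N * rr ^ dd (yN N i) (yN N j)) \<longlonglongrightarrow> 0"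
proof (rule n_pow_lin_zero[where c="\<bar>a i - a j\<bar>" and d=1])
  show "0 < rr" "rr < 1" using rr0 rr1 by auto
  have "a i \<noteq> a j"
  proof (cases "i < j")
    case True then show ?thesis using a_mono[of i j] i j by auto
  next
    case False then show ?thesis using a_mono[of j i] i j ij by auto
  qed
  then show "0 < \<bar>a i - a j\<bar>" by simp
  fix N
  show "\<bar>a i - a j\<bar> * real N - 1 \<le> real (dd (yN N i) (yN N j))"
  proof (cases "a i \<le> a j")
    case True
    then have "\<bar>a i - a j\<bar> * real N - 1 \<le> real (yN N j) - real (yN N i)"
      using yN_lb[OF j, of N] yN_ub[OF i, of N] by (simp add: algebra_simps)
    then show ?thesis using dd_ge1[of "yN N j" "yN N i"] by linarith
  next
    case False
    then have "\<bar>a i - a j\<bar> * real N - 1 \<le> real (yN N i) - real (yN N j)"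
      using yN_lb[OF i, of N] yN_ub[OF j, of N] by (simp add: algebra_simps)
    then show ?thesis using dd_ge2[of "yN N i" "yN N j"] by linarith
  qed
qed

lemma ev_T: "T \<subseteq> {1..k} \<Longrightarrow> eventually (\<lambda>N. xN N \<le> N \<and> (\<forall>i\<in>T. 0 < yN N i \<and> yN N i < N)) sequentially"
proof -
  assume T: "T \<subseteq> {1..k}"
  have fin: "finite T" using T finite_subset by blast
  have "eventually (\<lambda>N. \<forall>i\<in>T. 0 < xN N \<and> xN N < yN N i \<and> yN N i < N) sequentially"
    using ev_pos T by (intro eventually_ball_finite fin) auto
  moreover have "eventually (\<lambda>N. 0 < xN N \<and> xN N < yN N 1 \<and> yN N 1 < N) sequentially"
    using ev_pos[of 1] k1 by simp
  ultimately show ?thesis by eventually_elim auto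
qed

lemma U_lim:
  assumes T: "T \<subseteq> {1..k}"
  shows "(\<lambda>N. U N (\<lambda>i. yN N i) T (xN N)) \<longlonglongrightarrow> cc ^ card T"
proof -
  have fin: "finite T" using T finite_subset by blast
  define G where "G = 1 - (p * rho + q / rho)"
  have G: "0 < G" unfolding G_def using rho by simp
  define B where "B N = p * q * C2 / (p - q) * (\<Sum>i\<in>T. \<Sum>j\<in>T - {i}. real N * rr ^ dd (yN N i) (yN N j))
      + KK T / G * rho ^ xN N" for N
  have C2: "0 \<le> C2" unfolding C2_def by simp
  have pq: "0 < p - q" using qp by simp
  have limB: "B \<longlonglongrightarrow> p * q * C2 / (p - q) * (\<Sum>i\<in>T. \<Sum>j\<in>T - {i}. 0) + KK T / G * 0"
    unfolding B_def
  proof (intro tendsto_add tendsto_mult tendsto_const tendsto_sum)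
    show "(\<lambda>N. real N * rr ^ dd (yN N i) (yN N j)) \<longlonglongrightarrow> 0" if "i \<in> T" "j \<in> T - {i}" for i j
    proof -
      have "i \<in> {1..k}" "j \<in> {1..k}" "i \<noteq> j" using that T by auto
      then show ?thesis by (rule pair_lim)
    qed
    show "(\<lambda>N. rho ^ xN N) \<longlonglongrightarrow> 0" by (rule tendsto_power_zero[OF lim_xN]) (use rho in simp)
  qed
  then have limB0: "B \<longlonglongrightarrow> 0" by simp
  have ev: "eventually (\<lambda>N. norm (U N (\<lambda>i. yN N i) T (xN N) - (\<Prod>i\<in>T. ff N (yN N i) (xN N))) \<le> B N) sequentially"
    using ev_T[OF T]
  proof eventually_elim
    case (elim N)
    then have x: "xN N \<le> N" and y: "\<And>i. i \<in> T \<Longrightarrow> 0 < yN N i \<and> yN N i < N" by auto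
    have "norm (U N (\<lambda>i. yN N i) T (xN N) - (\<Prod>i\<in>T. ff N (yN N i) (xN N)))
       \<le> epsN (\<lambda>i. yN N i) T * (real N - real (xN N)) / (p - q) + KK T / G * rho ^ xN N"
      using approx[of T "\<lambda>i. yN N i" N "xN N", OF fin y x] unfolding G_def by simp
    also have "epsN (\<lambda>i. yN N i) T * (real N - real (xN N)) / (p - q) \<le> epsN (\<lambda>i. yN N i) T * real N / (p - q)"
    proof -
      have "0 \<le> epsN (\<lambda>i. yN N i) T" unfolding epsN_def using p0 q0 C2 rr0
        by (auto intro!: sum_nonneg mult_nonneg_nonneg)
      then show ?thesis using pq by (intro divide_right_mono mult_left_mono) auto
    qed
    also have "epsN (\<lambda>i. yN N i) T * real N / (p - q) =
        p * q * C2 / (p - q) * (\<Sum>i\<in>T. \<Sum>j\<in>T - {i}. real N * rr ^ dd (yN N i) (yN N j))"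
      unfolding epsN_def by (simp add: sum_distrib_left sum_distrib_right sum_divide_distrib algebra_simps)
    finally show ?case unfolding B_def by simp
  qed
  have D0: "(\<lambda>N. U N (\<lambda>i. yN N i) T (xN N) - (\<Prod>i\<in>T. ff N (yN N i) (xN N))) \<longlonglongrightarrow> 0"
    by (rule Lim_null_comparison[OF ev limB0])
  have P: "(\<lambda>N. \<Prod>i\<in>T. ff N (yN N i) (xN N)) \<longlonglongrightarrow> (\<Prod>i\<in>T. cc)"
    by (intro tendsto_prod ff_lim) (use T in auto)
  have "(\<lambda>N. (\<Prod>i\<in>T. ff N (yN N i) (xN N)) + (U N (\<lambda>i. yN N i) T (xN N) - (\<Prod>i\<in>T. ff N (yN N i) (xN N))))
      \<longlonglongrightarrow> (\<Prod>i\<in>T. cc) + 0"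
    by (rule tendsto_add[OF P D0])
  then show ?thesis by simp
qed

end


lemma prod_indic:
  assumes "finite I"
  shows "(\<Prod>i\<in>I. if P i then 1 else 0 :: real) = (if \<forall>i\<in>I. P i then 1 else 0)"
proof (cases "\<forall>i\<in>I. P i")
  case True then show ?thesis by simp
next
  case False
  then obtain i where "i \<in> I" "\<not> P i" by blast
  then show ?thesis using False assms by (simp add: prod_zero_iff)
qed

context rw2
begin

definition "eps B i = (if i \<in> B then -1 else (1::real))"

lemma factor_eq: "1 / 2 + eps B i / 2 * (-1) ^ n = (if odd n \<longleftrightarrow> i \<in> B then 1 else (0::real))"
  unfolding eps_def by (cases "even n") auto

definition "coef B X = (\<Prod>i\<in>X. eps B i / 2) * (\<Prod>i\<in>{1..k} - X. 1 / 2 :: real)"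

lemma P_eq:
  "Pwalk p (\<lambda>\<omega>. \<forall>i\<in>{1..k}. odd (visits N (xN N) (yN N i) \<omega>) \<longleftrightarrow> i \<in> B)
    = (\<Sum>X\<in>Pow {1..k}. coef B X * U N (\<lambda>i. yN N i) X (xN N))"
proof -
  interpret P: prob_space "SS p" by (rule S_prob)
  define E where "E = {\<omega> \<in> space (SS p). \<forall>i\<in>{1..k}. odd (visits N (xN N) (yN N i) \<omega>) \<longleftrightarrow> i \<in> B}"
  have Em: "E \<in> sets (SS p)" unfolding E_def by measurable
  have "Pwalk p (\<lambda>\<omega>. \<forall>i\<in>{1..k}. odd (visits N (xN N) (yN N i) \<omega>) \<longleftrightarrow> i \<in> B) = measure (SS p) E"
    unfolding Pwalk_def step_space_def E_def by simp
  also have "\<dots> = integral\<^sup>L (SS p) (indicator E)" using Em by simp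
  also have "\<dots> = integral\<^sup>L (SS p) (\<lambda>\<omega>. \<Sum>X\<in>Pow {1..k}. coef B X * Uf N (\<lambda>i. yN N i) X (xN N) \<omega>)"
  proof (rule Bochner_Integration.integral_cong[OF refl])
    fix \<omega> assume \<omega>: "\<omega> \<in> space (SS p)"
    have "indicator E \<omega> = (\<Prod>i\<in>{1..k}. 1 / 2 + eps B i / 2 * (-1) ^ visits N (xN N) (yN N i) \<omega> :: real)"
      unfolding factor_eq prod_indic[OF finite_atLeastAtMost] using \<omega> by (simp add: E_def indicator_def)
    also have "\<dots> = (\<Sum>X\<in>Pow {1..k}. (\<Prod>i\<in>X. eps B i / 2 * (-1) ^ visits N (xN N) (yN N i) \<omega>) * (\<Prod>i\<in>{1..k} - X. 1 / 2))"
      by (subst add.commute) (rule prod_add, simp)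
    also have "\<dots> = (\<Sum>X\<in>Pow {1..k}. coef B X * Uf N (\<lambda>i. yN N i) X (xN N) \<omega>)"
    proof (intro sum.cong refl)
      fix X
      show "(\<Prod>i\<in>X. eps B i / 2 * (-1) ^ visits N (xN N) (yN N i) \<omega>) * (\<Prod>i\<in>{1..k} - X. 1 / 2)
          = coef B X * Uf N (\<lambda>i. yN N i) X (xN N) \<omega>"
        unfolding coef_def Uf_def prod.distrib by (simp only: ac_simps)
    qed
    finally show "indicator E \<omega> = (\<Sum>X\<in>Pow {1..k}. coef B X * Uf N (\<lambda>i. yN N i) X (xN N) \<omega>)" .
  qed
  also have "\<dots> = (\<Sum>X\<in>Pow {1..k}. coef B X * U N (\<lambda>i. yN N i) X (xN N))"
  proof (subst Bochner_Integration.integral_sum)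
    show "integrable (SS p) (\<lambda>\<omega>. coef B X * Uf N (\<lambda>i. yN N i) X (xN N) \<omega>)" for X
      by (intro integrable_mult_right P.integrable_const_bound[where B=1]) (auto simp: abs_Uf)
  qed (simp add: U_def)
  finally show ?thesis .
qed

definition "\<pi> = 1 / (2 - (p - q))"

lemma cc_eq: "cc = 1 - 2 * \<pi>"
proof -
  have "2 - (p - q) = 1 + (p * rr + q)" using prr q_def by simp
  then show ?thesis unfolding cc_def \<pi>_def by simp
qed

lemma P_lim:
  assumes B: "B \<subseteq> {1..k}"
  shows "(\<lambda>N. Pwalk p (\<lambda>\<omega>. \<forall>i\<in>{1..k}. odd (visits N (xN N) (yN N i) \<omega>) \<longleftrightarrow> i \<in> B))
     \<longlonglongrightarrow> \<pi> ^ card B * (1 - \<pi>) ^ (k - card B)"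
proof -
  have lim: "(\<lambda>N. \<Sum>X\<in>Pow {1..k}. coef B X * U N (\<lambda>i. yN N i) X (xN N)) \<longlonglongrightarrow> (\<Sum>X\<in>Pow {1..k}. coef B X * cc ^ card X)"
    by (intro tendsto_sum tendsto_mult tendsto_const U_lim) auto
  have "(\<Sum>X\<in>Pow {1..k}. coef B X * cc ^ card X) = (\<Sum>X\<in>Pow {1..k}. (\<Prod>i\<in>X. eps B i * cc / 2) * (\<Prod>i\<in>{1..k} - X. 1 / 2))"
  proof (intro sum.cong refl)
    fix X assume X: "X \<in> Pow {1..k}"
    then have fX: "finite X" using finite_subset by auto
    have "(\<Prod>i\<in>X. eps B i * cc / 2) = (\<Prod>i\<in>X. cc * (eps B i / 2))" by (intro prod.cong) simp_all
    also have "\<dots> = cc ^ card X * (\<Prod>i\<in>X. eps B i / 2)" by (simp only: prod.distrib prod_constant)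
    finally show "coef B X * cc ^ card X = (\<Prod>i\<in>X. eps B i * cc / 2) * (\<Prod>i\<in>{1..k} - X. 1 / 2)"
      unfolding coef_def by simp
  qed
  also have "\<dots> = (\<Prod>i\<in>{1..k}. eps B i * cc / 2 + 1 / 2)"
    by (rule prod_add[symmetric]) simp
  also have "\<dots> = (\<Prod>i\<in>{1..k}. if i \<in> B then \<pi> else 1 - \<pi>)"
    by (intro prod.cong refl) (auto simp: eps_def cc_eq field_simps)
  also have "\<dots> = \<pi> ^ card B * (1 - \<pi>) ^ (k - card B)"
  proof -
    have a: "{1..k} \<inter> {x. x \<in> B} = B" using B by auto
    have b: "{1..k} \<inter> - {x. x \<in> B} = {1..k} - B" by auto
    have c: "card ({1..k} - B) = k - card B" using B by (simp add: card_Diff_subset finite_subset)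
    have a': "{1..k} \<inter> B = B" using B by auto
    have b': "{1..k} \<inter> - B = {1..k} - B" by auto
    show ?thesis by (subst prod.If_cases) (simp_all only: a b prod_constant c finite_atLeastAtMost)
  qed
  finally show ?thesis using lim unfolding P_eq by simp
qed

end


theorem proposition4p2:
  fixes p q \<alpha> :: real and k :: nat and a :: "nat \<Rightarrow> real"
  assumes q_def: "q = 1 - p"
    and pq: "0 < q" "q < p"
    and k: "k \<ge> 1"
    and alpha: "0 < \<alpha>" "\<alpha> < a 1"
    and mono: "\<And>i. 1 \<le> i \<Longrightarrow> i < k \<Longrightarrow> a i < a (Suc i)"
    and last: "a k < 1"
  shows "((\<lambda>N. Pwalk p (\<lambda>\<omega>. \<forall>i\<in>{1..k}.
              odd (visits N (nat \<lfloor>\<alpha> * real N\<rfloor>) (nat \<lfloor>a i * real N\<rfloor>) \<omega>)))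
           \<longlonglongrightarrow> 1 / (2 - (p - q)) ^ k) \<and>
         (\<forall>S. S \<subseteq> {1..k} \<longrightarrow>
          (\<lambda>N. Pwalk p (\<lambda>\<omega>. \<forall>i\<in>{1..k}.
              odd (visits N (nat \<lfloor>\<alpha> * real N\<rfloor>) (nat \<lfloor>a i * real N\<rfloor>) \<omega>) \<longleftrightarrow> i \<in> S))
           \<longlonglongrightarrow> (1 / (2 - (p - q))) ^ card S * (1 - 1 / (2 - (p - q))) ^ (k - card S))"
proof -
  interpret rw2 p q \<alpha> a k
    by unfold_locales (use q_def pq k alpha mono last in auto)
  have E: "(\<lambda>\<omega>. \<forall>i\<in>{1..k}. odd (visits N (nat \<lfloor>\<alpha> * real N\<rfloor>) (nat \<lfloor>a i * real N\<rfloor>) \<omega>) \<longleftrightarrow> i \<in> B)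
      = (\<lambda>\<omega>. \<forall>i\<in>{1..k}. odd (visits N (xN N) (yN N i) \<omega>) \<longleftrightarrow> i \<in> B)" for N B
    by (simp add: xN_def yN_def)
  have second: "\<forall>S. S \<subseteq> {1..k} \<longrightarrow>
          (\<lambda>N. Pwalk p (\<lambda>\<omega>. \<forall>i\<in>{1..k}.
              odd (visits N (nat \<lfloor>\<alpha> * real N\<rfloor>) (nat \<lfloor>a i * real N\<rfloor>) \<omega>) \<longleftrightarrow> i \<in> S))
           \<longlonglongrightarrow> (1 / (2 - (p - q))) ^ card S * (1 - 1 / (2 - (p - q))) ^ (k - card S)"
    using P_lim unfolding E \<pi>_def by blast
  have first: "(\<lambda>N. Pwalk p (\<lambda>\<omega>. \<forall>i\<in>{1..k}.
              odd (visits N (nat \<lfloor>\<alpha> * real N\<rfloor>) (nat \<lfloor>a i * real N\<rfloor>) \<omega>)))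
           \<longlonglongrightarrow> 1 / (2 - (p - q)) ^ k"
  proof -
    have e2: "(\<lambda>\<omega>. \<forall>i\<in>{1..k}. odd (visits N (nat \<lfloor>\<alpha> * real N\<rfloor>) (nat \<lfloor>a i * real N\<rfloor>) \<omega>))
      = (\<lambda>\<omega>. \<forall>i\<in>{1..k}. odd (visits N (nat \<lfloor>\<alpha> * real N\<rfloor>) (nat \<lfloor>a i * real N\<rfloor>) \<omega>) \<longleftrightarrow> i \<in> {1..k})" for N
      by auto
    have "(\<lambda>N. Pwalk p (\<lambda>\<omega>. \<forall>i\<in>{1..k}.
              odd (visits N (nat \<lfloor>\<alpha> * real N\<rfloor>) (nat \<lfloor>a i * real N\<rfloor>) \<omega>) \<longleftrightarrow> i \<in> {1..k}))
           \<longlonglongrightarrow> (1 / (2 - (p - q))) ^ card {1..k} * (1 - 1 / (2 - (p - q))) ^ (k - card {1..k})"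
      using second by blast
    then show ?thesis unfolding e2 by (simp add: power_one_over)
  qed
  show ?thesis using first second by blast
qed

end
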